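(* For any probability measure $\mu$ on $[0,1]^2$ and $n\in\mathbb N$, let $\mu_n=\frac1n\sum_{i=1}^n\delta_{X_i}$ with $X_1,\dots,X_n$ iid from $\mu$. Then $\mathbb E\sup_{S,T\subseteq[0,1]\text{ intervals}}|\mu(S\times T)-\mu_n(S\times T)|\le\frac{174}{\sqrt n}$. *)

theory Defs
  imports "HOL-Probability.Probability"
begin

definition empirical :: "nat \<Rightarrow> (nat \<Rightarrow> 'a) \<Rightarrow> 'a set \<Rightarrow> real" where
  "empirical n X A = real (card {i\<in>{..<n}. X i \<in> A}) / real n"

text \<open>Subintervals of [0,1] (possibly empty or degenerate, any endpoint type).\<close>
definition unit_subintervals :: "real set set" where
  "unit_subintervals = {S. is_interval S \<and> S \<subseteq> {0..1}}"

end

theory Submission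
  imports Defs
begin




lemma exp_le_quad:
  fixes y :: real assumes "\<bar>y\<bar> \<le> 1" shows "exp y \<le> 1 + y + y^2"
proof (cases "y \<ge> 0")
  case True thus ?thesis using exp_bound assms by auto
next
  case False
  define x where "x = -y"
  have x: "0 \<le> x" "x \<le> 1" using False assms by (auto simp: x_def)
  have e: "1 + x + x^2/2 \<le> exp x" using exp_lower_Taylor_quadratic x by auto
  have q: "0 < 1 - x + x^2"
  proof -
    have "1 - x + x^2 = (x - 1/2)^2 + 3/4" by (simp add: power2_eq_square algebra_simps)
    moreover have "0 \<le> (x - 1/2)^2" by simp
    ultimately show ?thesis by linarith
  qed
  have "1 \<le> (1 - x + x^2) * (1 + x + x^2/2)"
  proof -
    have "(1 - x + x^2) * (1 + x + x^2/2) = 1 + (x^2 + x^3 + x^4) / 2"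
      by (simp add: field_simps power2_eq_square power3_eq_cube power4_eq_xxxx)
    moreover have "0 \<le> x^2 + x^3 + x^4" using x by simp
    ultimately show ?thesis by simp
  qed
  also have "\<dots> \<le> (1 - x + x^2) * exp x" using e q by (intro mult_left_mono) auto
  finally have "1 / exp x \<le> 1 - x + x^2" by (simp add: field_simps)
  thus ?thesis by (simp add: x_def exp_minus field_simps)
qed

lemma bernoulli_mgf:
  fixes p t :: real assumes p: "0 \<le> p" "p \<le> 1" and t: "\<bar>t\<bar> \<le> 1"
  shows "p * exp (t * (p - 1)) + (1 - p) * exp (t * p) \<le> exp (p * t^2)"
proof -
  have "p * exp (t * (p - 1)) + (1 - p) * exp (t * p) = exp (t * p) * (1 - p + p * exp (-t))"
    by (simp add: algebra_simps exp_diff exp_minus field_simps)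
  also have "\<dots> \<le> exp (t * p) * (1 + p * (- t + t^2))"
  proof -
    have "exp (-t) \<le> 1 + (-t) + (-t)^2" using t by (intro exp_le_quad) auto
    hence "p * exp (-t) \<le> p * (1 - t + t^2)" using p by (intro mult_left_mono) auto
    thus ?thesis by (intro mult_left_mono) (auto simp: algebra_simps)
  qed
  also have "\<dots> \<le> exp (t * p) * exp (p * (- t + t^2))"
    by (intro mult_left_mono) (auto simp: exp_ge_add_one_self)
  also have "\<dots> = exp (p * t^2)" by (simp add: exp_add[symmetric] algebra_simps)
  finally show ?thesis .
qed

lemma card_filter_sum:
  fixes n :: nat shows "real (card {i\<in>{..<n}. Y i \<in> D}) = (\<Sum>i<n. indicator D (Y i))"
proof (induction n)
  case 0 then show ?case by simp
next
  case (Suc n)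
  have "{i\<in>{..<Suc n}. Y i \<in> D} = (if Y n \<in> D then insert n {i\<in>{..<n}. Y i \<in> D} else {i\<in>{..<n}. Y i \<in> D})"
    by (auto simp: less_Suc_eq)
  then show ?case using Suc by (simp add: indicator_def)
qed

definition devs :: "'a measure \<Rightarrow> nat \<Rightarrow> 'a set \<Rightarrow> (nat \<Rightarrow> 'a) \<Rightarrow> real" where
  "devs M n D Y = measure M D - empirical n Y D"

lemma devs_sum: "devs M n D Y = measure M D - (\<Sum>i<n. indicator D (Y i)) / real n"
  unfolding devs_def empirical_def card_filter_sum ..

lemma devs_mult: assumes "n > 0"
  shows "real n * devs M n D Y = (\<Sum>i<n. measure M D - indicator D (Y i))"
  using assms by (simp add: devs_sum sum_subtractf algebra_simps)

lemma measurable_devs[measurable]: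
  assumes "D \<in> sets M"
  shows "(\<lambda>Y. devs M n D Y) \<in> borel_measurable (PiM {..<n} (\<lambda>_. M))"
  unfolding devs_sum using assms by measurable

lemma mgf_bound:
  assumes M: "prob_space M" and D: "D \<in> sets M" and t: "\<bar>t\<bar> \<le> 1"
  shows "(\<integral>\<^sup>+Y. ennreal (exp (t * (\<Sum>i<n. measure M D - indicator D (Y i)))) \<partial>PiM {..<n} (\<lambda>_. M))
     \<le> ennreal (exp (real n * measure M D * t^2))"
proof -
  interpret M: prob_space M by fact
  interpret P: product_prob_space "\<lambda>_. M" by (intro product_prob_spaceI) fact
  define p where "p = measure M D"
  have p: "0 \<le> p" "p \<le> 1" by (auto simp: p_def)
  define g where "g = (\<lambda>\<omega>. ennreal (exp (t * (p - indicator D \<omega>))))"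
  have gm[measurable]: "g \<in> borel_measurable M" unfolding g_def using D by measurable
  have "(\<integral>\<^sup>+Y. ennreal (exp (t * (\<Sum>i<n. measure M D - indicator D (Y i)))) \<partial>PiM {..<n} (\<lambda>_. M))
      = (\<integral>\<^sup>+Y. (\<Prod>i<n. g (Y i)) \<partial>PiM {..<n} (\<lambda>_. M))"
    by (intro nn_integral_cong)
       (simp add: g_def p_def sum_distrib_left exp_sum prod_ennreal)
  also have "\<dots> = (\<Prod>i<n. integral\<^sup>N M g)"
    by (rule P.product_nn_integral_prod) auto
  also have "\<dots> = (integral\<^sup>N M g) ^ n" by simp
  also have "integral\<^sup>N M g = ennreal (p * exp (t * (p - 1)) + (1 - p) * exp (t * p))"
  proof -
    have "integral\<^sup>N M g = (\<integral>\<^sup>+\<omega>. ennreal (exp (t * (p - 1))) * indicator D \<omega>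
           + ennreal (exp (t * p)) * indicator (space M - D) \<omega> \<partial>M)"
      by (intro nn_integral_cong) (auto simp: g_def indicator_def)
    also have "\<dots> = ennreal (exp (t * (p - 1))) * emeasure M D + ennreal (exp (t * p)) * emeasure M (space M - D)"
      using D by (subst nn_integral_add) (auto simp: nn_integral_cmult_indicator)
    also have "\<dots> = ennreal (exp (t * (p - 1))) * ennreal p + ennreal (exp (t * p)) * ennreal (1 - p)"
      using D by (simp add: M.emeasure_eq_measure M.prob_compl p_def)
    also have "\<dots> = ennreal (p * exp (t * (p - 1)) + (1 - p) * exp (t * p))"
      using p by (simp add: ennreal_mult ennreal_plus mult.commute)
    finally show ?thesis .
  qed
  also have "(ennreal (p * exp (t * (p - 1)) + (1 - p) * exp (t * p))) ^ n \<le> (ennreal (exp (p * t^2))) ^ n"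
    by (intro power_mono ennreal_leI bernoulli_mgf p t) auto
  also have "\<dots> = ennreal (exp (real n * measure M D * t^2))"
    by (simp add: ennreal_power exp_of_nat_mult[symmetric] p_def mult.assoc)
  finally show ?thesis .
qed




definition Gf :: "'a measure \<Rightarrow> nat \<Rightarrow> 'a set set \<Rightarrow> real \<Rightarrow> real \<Rightarrow> (nat \<Rightarrow> 'a) \<Rightarrow> real" where
 "Gf M n F s P Y = (1 / (s * real n)) *
    ((\<Sum>D\<in>F. exp (s * real n * devs M n D Y) + exp (- (s * real n * devs M n D Y)))
       / (2 * real (card F) * exp (real n * P * s^2))
     + ln (2 * real (card F) * exp (real n * P * s^2)))"

lemma Gf_ge:
  assumes F: "finite F" "D \<in> F" and s: "s > 0" and n: "n > 0"
  shows "\<bar>devs M n D Y\<bar> \<le> Gf M n F s P Y"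
proof -
  define a where "a = s * real n * devs M n D Y"
  define Z where "Z = (\<Sum>D\<in>F. exp (s * real n * devs M n D Y) + exp (- (s * real n * devs M n D Y)))"
  define c where "c = 2 * real (card F) * exp (real n * P * s^2)"
  have cF: "card F > 0" using F card_gt_0_iff by blast
  have c: "c > 0" unfolding c_def using cF by simp
  have "exp \<bar>a\<bar> \<le> exp a + exp (-a)"
    by (cases "a \<ge> 0") (auto simp: add_increasing add_increasing2 less_imp_le)
  also have "\<dots> \<le> Z" unfolding Z_def a_def
    by (rule member_le_sum[OF F(2) _ F(1)]) (auto intro: add_nonneg_nonneg)
  finally have Za: "exp \<bar>a\<bar> \<le> Z" .
  have Zpos: "Z > 0" using Za exp_gt_zero[of "\<bar>a\<bar>"] by linarith
  have "\<bar>a\<bar> \<le> ln Z" using Za Zpos by (metis exp_gt_zero ln_exp ln_le_cancel_iff)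
  also have "ln Z \<le> Z / c + ln c"
  proof -
    have "ln (Z / c) \<le> Z / c - 1" using Zpos c by (intro ln_le_minus_one) auto
    thus ?thesis using Zpos c by (simp add: ln_div)
  qed
  finally have "\<bar>a\<bar> \<le> Z / c + ln c" .
  hence "\<bar>a\<bar> / (s * real n) \<le> (Z / c + ln c) / (s * real n)"
    using s n by (intro divide_right_mono) auto
  moreover have "\<bar>a\<bar> / (s * real n) = \<bar>devs M n D Y\<bar>"
    using s n by (simp add: a_def abs_mult)
  ultimately show ?thesis by (simp add: Gf_def Z_def c_def)
qed

lemma Gf_int:
  assumes M: "prob_space M" and F: "finite F" "F \<noteq> {}" "F \<subseteq> sets M"
    and FP: "\<And>D. D \<in> F \<Longrightarrow> measure M D \<le> P"
    and s: "0 < s" "s \<le> 1" and n: "n > 0"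
  shows "(\<integral>\<^sup>+Y. ennreal (Gf M n F s P Y) \<partial>PiM {..<n} (\<lambda>_. M))
     \<le> ennreal ((ln (2 * real (card F)) + real n * P * s^2 + 1) / (s * real n))"
proof -
  interpret M: prob_space M by fact
  interpret PM: prob_space "PiM {..<n} (\<lambda>_. M)" by (intro prob_space_PiM) (simp add: M)
  obtain D0 where "D0 \<in> F" using F by auto
  hence P0: "0 \<le> P" using FP[of D0] by (meson measure_nonneg order_trans)
  define c where "c = 2 * real (card F) * exp (real n * P * s^2)"
  define k where "k = 1 / (s * real n)"
  have cF: "card F > 0" using F card_gt_0_iff by blast
  have c: "c > 0" unfolding c_def using cF by simp
  have k: "k > 0" unfolding k_def using s n by simp
  have lnc: "ln c = ln (2 * real (card F)) + real n * P * s^2"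
    unfolding c_def using cF by (simp add: ln_mult)
  have lnc0: "0 \<le> ln c"
  proof -
    have "1 \<le> 2 * real (card F)" using cF by simp
    hence "0 \<le> ln (2 * real (card F))" by simp
    moreover have "0 \<le> real n * P * s^2" using P0 by simp
    ultimately show ?thesis using lnc by simp
  qed
  define ep where "ep = (\<lambda>D Y. exp (s * real n * devs M n D Y))"
  define em where "em = (\<lambda>D Y. exp (- (s * real n * devs M n D Y)))"
  have epm[measurable]: "ep D \<in> borel_measurable (PiM {..<n} (\<lambda>_. M))" if "D \<in> F" for D
  proof -
    have [measurable]: "D \<in> sets M" using that F by auto
    show ?thesis unfolding ep_def by measurable
  qed
  have emm[measurable]: "em D \<in> borel_measurable (PiM {..<n} (\<lambda>_. M))" if "D \<in> F" for D
  proof -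
    have [measurable]: "D \<in> sets M" using that F by auto
    show ?thesis unfolding em_def by measurable
  qed
  have eq: "ennreal (Gf M n F s P Y) = ennreal (k / c) * (\<Sum>D\<in>F. ennreal (ep D Y) + ennreal (em D Y)) + ennreal (k * ln c)" for Y
  proof -
    have S0: "0 \<le> (\<Sum>D\<in>F. ep D Y + em D Y)" by (auto simp: ep_def em_def intro!: sum_nonneg add_nonneg_nonneg)
    have "Gf M n F s P Y = k * ((\<Sum>D\<in>F. ep D Y + em D Y) / c + ln c)"
      by (simp add: Gf_def k_def c_def ep_def em_def)
    also have "\<dots> = k / c * (\<Sum>D\<in>F. ep D Y + em D Y) + k * ln c"
      by (simp add: distrib_left)
    finally have "Gf M n F s P Y = k / c * (\<Sum>D\<in>F. ep D Y + em D Y) + k * ln c" .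
    hence "ennreal (Gf M n F s P Y) = ennreal (k / c * (\<Sum>D\<in>F. ep D Y + em D Y)) + ennreal (k * ln c)"
      using S0 k c lnc0 by (simp add: ennreal_plus)
    also have "ennreal (k / c * (\<Sum>D\<in>F. ep D Y + em D Y)) = ennreal (k / c) * ennreal (\<Sum>D\<in>F. ep D Y + em D Y)"
      using S0 k c by (subst ennreal_mult[symmetric]) auto
    also have "ennreal (\<Sum>D\<in>F. ep D Y + em D Y) = (\<Sum>D\<in>F. ennreal (ep D Y) + ennreal (em D Y))"
      by (subst sum_ennreal[symmetric]) (auto simp: ep_def em_def)
    finally show ?thesis .
  qed
  have bnd: "(\<integral>\<^sup>+Y. ennreal (ep D Y) \<partial>PiM {..<n} (\<lambda>_. M)) \<le> ennreal (exp (real n * P * s^2))"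
        "(\<integral>\<^sup>+Y. ennreal (em D Y) \<partial>PiM {..<n} (\<lambda>_. M)) \<le> ennreal (exp (real n * P * s^2))"
    if D: "D \<in> F" for D
  proof -
    have DM: "D \<in> sets M" using D F by auto
    have e2: "ennreal (exp (real n * measure M D * t^2)) \<le> ennreal (exp (real n * P * s^2))" if "t^2 = s^2" for t
    proof -
      have "real n * measure M D * s^2 \<le> real n * P * s^2"
        using FP[OF D] by (intro mult_right_mono mult_left_mono) auto
      thus ?thesis using that by (intro ennreal_leI) simp
    qed
    have "(\<integral>\<^sup>+Y. ennreal (ep D Y) \<partial>PiM {..<n} (\<lambda>_. M))
        = (\<integral>\<^sup>+Y. ennreal (exp (s * (\<Sum>i<n. measure M D - indicator D (Y i)))) \<partial>PiM {..<n} (\<lambda>_. M))"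
      by (intro nn_integral_cong) (simp add: ep_def devs_mult[OF n, symmetric] mult.assoc)
    also have "\<dots> \<le> ennreal (exp (real n * measure M D * s^2))"
      by (rule mgf_bound[OF M DM]) (use s in auto)
    also have "\<dots> \<le> ennreal (exp (real n * P * s^2))" by (rule e2) simp
    finally show "(\<integral>\<^sup>+Y. ennreal (ep D Y) \<partial>PiM {..<n} (\<lambda>_. M)) \<le> ennreal (exp (real n * P * s^2))" .
    have "(\<integral>\<^sup>+Y. ennreal (em D Y) \<partial>PiM {..<n} (\<lambda>_. M))
        = (\<integral>\<^sup>+Y. ennreal (exp ((-s) * (\<Sum>i<n. measure M D - indicator D (Y i)))) \<partial>PiM {..<n} (\<lambda>_. M))"
      by (intro nn_integral_cong) (simp add: em_def devs_mult[OF n, symmetric] mult.assoc)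
    also have "\<dots> \<le> ennreal (exp (real n * measure M D * (-s)^2))"
      by (rule mgf_bound[OF M DM]) (use s in auto)
    also have "\<dots> \<le> ennreal (exp (real n * P * s^2))" by (rule e2) simp
    finally show "(\<integral>\<^sup>+Y. ennreal (em D Y) \<partial>PiM {..<n} (\<lambda>_. M)) \<le> ennreal (exp (real n * P * s^2))" .
  qed
  have "(\<integral>\<^sup>+Y. ennreal (Gf M n F s P Y) \<partial>PiM {..<n} (\<lambda>_. M))
      = (\<integral>\<^sup>+Y. ennreal (k / c) * (\<Sum>D\<in>F. ennreal (ep D Y) + ennreal (em D Y)) + ennreal (k * ln c) \<partial>PiM {..<n} (\<lambda>_. M))"
    by (simp add: eq)
  also have "\<dots> = ennreal (k / c) * (\<Sum>D\<in>F. (\<integral>\<^sup>+Y. ennreal (ep D Y) \<partial>PiM {..<n} (\<lambda>_. M)) + (\<integral>\<^sup>+Y. ennreal (em D Y) \<partial>PiM {..<n} (\<lambda>_. M))) + ennreal (k * ln c)"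
    using F by (simp add: nn_integral_add nn_integral_cmult nn_integral_sum PM.emeasure_space_1 subset_eq)
  also have "\<dots> \<le> ennreal (k / c) * (\<Sum>D\<in>F. ennreal (exp (real n * P * s^2)) + ennreal (exp (real n * P * s^2))) + ennreal (k * ln c)"
    by (intro add_mono mult_left_mono sum_mono order_refl) (auto intro: bnd)
  also have "(\<Sum>D\<in>F. ennreal (exp (real n * P * s^2)) + ennreal (exp (real n * P * s^2))) = ennreal c"
    by (simp add: c_def ennreal_mult ennreal_plus[symmetric] ennreal_of_nat_eq_real_of_nat mult_ac)
  also have "ennreal (k / c) * ennreal c + ennreal (k * ln c) = ennreal (k * (1 + ln c))"
  proof -
    have "ennreal (k / c) * ennreal c = ennreal k"
      by (subst ennreal_mult[symmetric]) (use k c in auto)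
    moreover have "ennreal k + ennreal (k * ln c) = ennreal (k * (1 + ln c))"
      by (subst ennreal_plus[symmetric]) (use k lnc0 in \<open>auto simp: distrib_left\<close>)
    ultimately show ?thesis by simp
  qed
  also have "k * (1 + ln c) = (ln (2 * real (card F)) + real n * P * s^2 + 1) / (s * real n)"
    by (simp add: k_def lnc)
  finally show ?thesis .
qed




definition P01 :: "real measure" where "P01 = uniform_measure lborel {0..1}"

lemma sets_P01[measurable_cong]: "sets P01 = sets borel"
  by (simp add: P01_def)
lemma space_P01: "space P01 = UNIV"
  by (simp add: P01_def)
lemma prob_space_P01: "prob_space P01"
  unfolding P01_def by (intro prob_space_uniform_measure) auto
lemma emeasure_P01: "B \<in> sets borel \<Longrightarrow> emeasure P01 B = emeasure lborel (B \<inter> {0..1})"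
  by (simp add: P01_def Int_commute divide_ennreal_def)

locale lift = prob_space M for M :: "'a measure" +
  fixes X :: "'a \<Rightarrow> real"
  assumes Xm[measurable]: "X \<in> borel_measurable M"
begin

definition Fp where "Fp x = measure M {\<omega>\<in>space M. X \<omega> \<le> x}"
definition Fm where "Fm x = measure M {\<omega>\<in>space M. X \<omega> < x}"

lemma Fp_mono: "x \<le> y \<Longrightarrow> Fp x \<le> Fp y"
  unfolding Fp_def by (intro finite_measure_mono) auto
lemma Fm_mono: "x \<le> y \<Longrightarrow> Fm x \<le> Fm y"
  unfolding Fm_def by (intro finite_measure_mono) auto
lemma Fm_le_Fp: "Fm x \<le> Fp x"
  unfolding Fp_def Fm_def by (intro finite_measure_mono) auto
lemma Fp_le_Fm: "x < y \<Longrightarrow> Fp x \<le> Fm y"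
  unfolding Fp_def Fm_def by (intro finite_measure_mono) auto
lemma Fm_ge0: "0 \<le> Fm x" unfolding Fm_def by simp
lemma Fp_le1: "Fp x \<le> 1" unfolding Fp_def by simp

lemma Fp_meas[measurable]: "Fp \<in> borel_measurable borel"
  by (rule borel_measurable_mono) (auto simp: mono_def Fp_mono)
lemma Fm_meas[measurable]: "Fm \<in> borel_measurable borel"
  by (rule borel_measurable_mono) (auto simp: mono_def Fm_mono)

lemma Fm_as_sup:
  assumes "\<And>z. z < y \<Longrightarrow> Fp z \<le> c"
  shows "Fm y \<le> c"
proof -
  have c0: "0 \<le> c" using assms[of "y - 1"] measure_nonneg[of M "{\<omega>\<in>space M. X \<omega> \<le> y - 1}"]
    unfolding Fp_def by linarith
  define A where "A = (\<lambda>k::nat. {\<omega>\<in>space M. X \<omega> \<le> y - 1 / Suc k})"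
  have inc: "incseq A" unfolding A_def incseq_def
    by (auto intro: order_trans[OF _ diff_left_mono] simp: frac_le)
  have UA: "(\<Union>k. A k) = {\<omega>\<in>space M. X \<omega> < y}"
  proof (safe)
    fix \<omega> assume "\<omega> \<in> space M" "X \<omega> < y"
    then obtain k where "inverse (real (Suc k)) < y - X \<omega>" using reals_Archimedean[of "y - X \<omega>"] by auto
    hence "X \<omega> \<le> y - 1 / Suc k" by (simp add: inverse_eq_divide)
    thus "\<omega> \<in> (\<Union>k. A k)" using \<open>\<omega> \<in> space M\<close> unfolding A_def by blast
  qed (auto simp: A_def dest: order.strict_trans1[OF _ diff_strict_left_mono[of 0]] )
  have "emeasure M {\<omega>\<in>space M. X \<omega> < y} = (SUP k. emeasure M (A k))"
  proof -
    have "range A \<subseteq> sets M" by (auto simp: A_def)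
    from SUP_emeasure_incseq[OF this inc] UA show ?thesis by simp
  qed
  also have "\<dots> \<le> ennreal c"
  proof (rule SUP_least)
    fix k
    have "Fp (y - 1 / Suc k) \<le> c" by (intro assms) simp
    thus "emeasure M (A k) \<le> ennreal c" by (simp add: A_def Fp_def emeasure_eq_measure ennreal_leI)
  qed
  finally show ?thesis using c0 by (simp add: Fm_def emeasure_eq_measure)
qed

lemma total_le:
  assumes "\<And>k::nat. Fp (real k) \<le> c" shows "1 \<le> c"
proof -
  define A where "A = (\<lambda>k::nat. {\<omega>\<in>space M. X \<omega> \<le> real k})"
  have inc: "incseq A" unfolding A_def incseq_def by auto
  have UA: "(\<Union>k. A k) = space M"
    by (auto simp: A_def) (meson real_arch_simple)
  have "emeasure M (space M) = (SUP k. emeasure M (A k))"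
  proof -
    have "range A \<subseteq> sets M" by (auto simp: A_def)
    from SUP_emeasure_incseq[OF this inc] UA show ?thesis by simp
  qed
  also have "\<dots> \<le> ennreal c"
  proof (rule SUP_least)
    fix k show "emeasure M (A k) \<le> ennreal c" using assms[of k] by (simp add: A_def Fp_def emeasure_eq_measure ennreal_leI)
  qed
  finally show ?thesis by (simp add: emeasure_space_1)
qed

lemma Fp_as_inf:
  assumes "\<And>z. z > y \<Longrightarrow> c \<le> Fm z"
  shows "c \<le> Fp y"
proof -
  define A where "A = (\<lambda>k::nat. {\<omega>\<in>space M. X \<omega> \<le> y + 1 / Suc k})"
  have dec: "decseq A" unfolding A_def decseq_def
    by (auto intro: order_trans simp: frac_le)
  have IA: "(\<Inter>k. A k) = {\<omega>\<in>space M. X \<omega> \<le> y}"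
  proof (safe)
    fix \<omega> assume "\<omega> \<in> (\<Inter>k. A k)"
    hence *: "\<And>k. X \<omega> \<le> y + 1 / Suc k" "\<omega> \<in> space M" by (auto simp: A_def)
    show "X \<omega> \<le> y"
    proof (rule ccontr)
      assume "\<not> X \<omega> \<le> y"
      then obtain k where "inverse (real (Suc k)) < X \<omega> - y" using reals_Archimedean[of "X \<omega> - y"] by auto
      hence "1 / Suc k < X \<omega> - y" by (simp add: inverse_eq_divide)
      thus False using *(1)[of k] by simp
    qed
    show "\<omega> \<in> space M" by fact
  qed (auto simp: A_def intro: order_trans)
  have "emeasure M {\<omega>\<in>space M. X \<omega> \<le> y} = (INF k. emeasure M (A k))"
  proof -
    have "range A \<subseteq> sets M" by (auto simp: A_def)
    from INF_emeasure_decseq[OF this dec] IA show ?thesis by (simp add: emeasure_eq_measure)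
  qed
  also have "ennreal c \<le> (INF k. emeasure M (A k))"
  proof (rule INF_greatest)
    fix k
    have "c \<le> Fm (y + 1 / Suc k)" by (intro assms) simp
    also have "\<dots> \<le> Fp (y + 1 / Suc k)" by (rule Fm_le_Fp)
    finally show "ennreal c \<le> emeasure M (A k)" by (simp add: A_def Fp_def emeasure_eq_measure)
  qed
  finally show ?thesis by (simp add: Fp_def emeasure_eq_measure)
qed

lemma bot_le:
  assumes "\<And>k::nat. c \<le> Fm (- real k)" shows "c \<le> 0"
proof -
  define A where "A = (\<lambda>k::nat. {\<omega>\<in>space M. X \<omega> < - real k})"
  have dec: "decseq A" unfolding A_def decseq_def by auto
  have IA: "(\<Inter>k. A k) = {}"
  proof safe
    fix \<omega> assume "\<omega> \<in> (\<Inter>k. A k)"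
    moreover obtain k where "- X \<omega> \<le> real k" by (meson real_arch_simple)
    ultimately show "\<omega> \<in> {}" by (auto simp: A_def dest: spec[of _ k])
  qed
  have "ennreal c \<le> (INF k. emeasure M (A k))"
  proof (rule INF_greatest)
    fix k show "ennreal c \<le> emeasure M (A k)" using assms[of k] by (simp add: A_def Fm_def emeasure_eq_measure)
  qed
  also have "\<dots> = 0"
  proof -
    have "range A \<subseteq> sets M" by (auto simp: A_def)
    from INF_emeasure_decseq[OF this dec] IA show ?thesis by simp
  qed
  finally show ?thesis by (metis ennreal_eq_0_iff le_zero_eq)
qed

lemma L1:
  assumes c: "0 \<le> c"
  shows "measure M {\<omega>\<in>space M. Fp (X \<omega>) \<le> c} \<le> c"
proof -
  define A where "A = {x. Fp x \<le> c}"
  have down: "z \<in> A" if "a \<in> A" "z \<le> a" for a z using that Fp_mono[of z a] by (auto simp: A_def)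
  show ?thesis
  proof (cases "A = {}")
    case True
    hence e: "{\<omega>\<in>space M. Fp (X \<omega>) \<le> c} = {}" by (auto simp: A_def)
    show ?thesis using c by (simp add: e)
  next
    case ne: False
    show ?thesis
    proof (cases "bdd_above A")
      case False
      have "Fp z \<le> c" for z
      proof -
        obtain a where "a \<in> A" "z \<le> a" using False by (meson bdd_above_def linear)
        thus ?thesis using down by (auto simp: A_def)
      qed
      hence "1 \<le> c" by (intro total_le)
      thus ?thesis by (meson order_trans prob_le_1)
    next
      case True
      define y where "y = Sup A"
      show ?thesis
      proof (cases "y \<in> A")
        case True
        have "measure M {\<omega>\<in>space M. Fp (X \<omega>) \<le> c} \<le> Fp y" unfolding Fp_def[of y]
        proof (intro finite_measure_mono)
          show "{\<omega> \<in> space M. Fp (X \<omega>) \<le> c} \<subseteq> {\<omega> \<in> space M. X \<omega> \<le> y}"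
          proof safe
            fix \<omega> assume "\<omega> \<in> space M" "Fp (X \<omega>) \<le> c"
            hence "X \<omega> \<in> A" by (simp add: A_def)
            thus "X \<omega> \<le> y" using \<open>bdd_above A\<close> by (simp add: y_def cSup_upper)
          qed
        qed auto
        thus ?thesis using True by (simp add: A_def)
      next
        case False
        have "measure M {\<omega>\<in>space M. Fp (X \<omega>) \<le> c} \<le> Fm y" unfolding Fm_def[of y]
        proof (intro finite_measure_mono)
          show "{\<omega> \<in> space M. Fp (X \<omega>) \<le> c} \<subseteq> {\<omega> \<in> space M. X \<omega> < y}"
          proof safe
            fix \<omega> assume "\<omega> \<in> space M" "Fp (X \<omega>) \<le> c"
            hence "X \<omega> \<in> A" by (simp add: A_def)
            hence "X \<omega> \<le> y" using \<open>bdd_above A\<close> by (simp add: y_def cSup_upper)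
            moreover have "X \<omega> \<noteq> y" using False \<open>X \<omega> \<in> A\<close> by auto
            ultimately show "X \<omega> < y" by simp
          qed
        qed auto
        also have "Fm y \<le> c"
        proof (rule Fm_as_sup)
          fix z assume "z < y"
          then obtain a where "a \<in> A" "z < a" using less_cSup_iff[OF ne \<open>bdd_above A\<close>] by (auto simp: y_def)
          thus "Fp z \<le> c" using down[of a z] by (auto simp: A_def)
        qed
        finally show ?thesis .
      qed
    qed
  qed
qed

lemma L2:
  assumes c: "c \<le> 1"
  shows "c \<le> measure M {\<omega>\<in>space M. Fm (X \<omega>) < c}"
proof -
  define B where "B = {x. c \<le> Fm x}"
  have up: "z \<in> B" if "a \<in> B" "a \<le> z" for a z using that Fm_mono[of a z] by (auto simp: B_def)
  show ?thesis
  proof (cases "B = {}")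
    case True
    have "Fm x < c" for x
    proof (rule ccontr)
      assume "\<not> Fm x < c" hence "x \<in> B" by (simp add: B_def)
      with True show False by simp
    qed
    hence e: "{\<omega>\<in>space M. Fm (X \<omega>) < c} = space M" by auto
    show ?thesis using c by (simp add: e prob_space)
  next
    case ne: False
    show ?thesis
    proof (cases "bdd_below B")
      case False
      have "c \<le> Fm z" for z
      proof -
        obtain a where "a \<in> B" "a \<le> z" using False by (meson bdd_below_def linear)
        thus ?thesis using up by (auto simp: B_def)
      qed
      hence "c \<le> 0" by (intro bot_le)
      thus ?thesis by (meson order_trans measure_nonneg)
    next
      case True
      define y where "y = Inf B"
      show ?thesis
      proof (cases "y \<in> B")
        case True
        have "c \<le> Fm y" using True by (simp add: B_def)
        also have "Fm y \<le> measure M {\<omega>\<in>space M. Fm (X \<omega>) < c}" unfolding Fm_def[of y]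
        proof (intro finite_measure_mono)
          show "{\<omega> \<in> space M. X \<omega> < y} \<subseteq> {\<omega> \<in> space M. Fm (X \<omega>) < c}"
          proof safe
            fix \<omega> assume "\<omega> \<in> space M" "X \<omega> < y"
            hence "X \<omega> \<notin> B" using \<open>bdd_below B\<close> by (metis cInf_lower not_le y_def)
            thus "Fm (X \<omega>) < c" by (simp add: B_def)
          qed
        qed auto
        finally show ?thesis .
      next
        case False
        have "c \<le> Fp y"
        proof (rule Fp_as_inf)
          fix z assume "y < z"
          then obtain b where "b \<in> B" "b < z" using cInf_less_iff[OF ne \<open>bdd_below B\<close>] by (auto simp: y_def)
          thus "c \<le> Fm z" using up[of b z] by (auto simp: B_def)
        qed
        also have "Fp y \<le> measure M {\<omega>\<in>space M. Fm (X \<omega>) < c}" unfolding Fp_def[of y]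
        proof (intro finite_measure_mono)
          show "{\<omega> \<in> space M. X \<omega> \<le> y} \<subseteq> {\<omega> \<in> space M. Fm (X \<omega>) < c}"
          proof safe
            fix \<omega> assume "\<omega> \<in> space M" "X \<omega> \<le> y"
            show "Fm (X \<omega>) < c"
            proof (rule ccontr)
              assume "\<not> Fm (X \<omega>) < c"
              hence "X \<omega> \<in> B" by (simp add: B_def)
              hence "y \<le> X \<omega>" using \<open>bdd_below B\<close> by (simp add: y_def cInf_lower)
              hence "X \<omega> = y" using \<open>X \<omega> \<le> y\<close> by simp
              thus False using False \<open>X \<omega> \<in> B\<close> by simp
            qed
          qed
        qed auto
        finally show ?thesis .
      qed
    qed
  qed
qed


definition W where "W \<omega> v = Fm (X \<omega>) + max 0 (min 1 v) * (Fp (X \<omega>) - Fm (X \<omega>))"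

lemma W_ge: "Fm (X \<omega>) \<le> W \<omega> v"
  unfolding W_def using Fm_le_Fp[of "X \<omega>"] by simp
lemma W_le: "W \<omega> v \<le> Fp (X \<omega>)"
proof -
  have "max 0 (min 1 v) * (Fp (X \<omega>) - Fm (X \<omega>)) \<le> 1 * (Fp (X \<omega>) - Fm (X \<omega>))"
    using Fm_le_Fp[of "X \<omega>"] by (intro mult_right_mono) auto
  thus ?thesis unfolding W_def by simp
qed
lemma W_01: "v \<in> {0..1} \<Longrightarrow> W \<omega> v = Fm (X \<omega>) + v * (Fp (X \<omega>) - Fm (X \<omega>))"
  unfolding W_def by simp

lemma W_meas[measurable]: "(\<lambda>p. W (fst p) (snd p)) \<in> borel_measurable (M \<Otimes>\<^sub>M P01)"
  unfolding W_def by measurable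

lemma W_meas_v[measurable]: "(\<lambda>v. W \<omega> v) \<in> borel_measurable borel"
  unfolding W_def by measurable

lemma W_sets[measurable]: "{v. W \<omega> v \<le> c} \<in> sets borel" "{v. W \<omega> v < c} \<in> sets borel"
proof -
  have "{v. W \<omega> v \<le> c} = {v \<in> space borel. W \<omega> v \<le> c}" "{v. W \<omega> v < c} = {v \<in> space borel. W \<omega> v < c}" by auto
  moreover have "{v \<in> space borel. W \<omega> v \<le> c} \<in> sets borel" "{v \<in> space borel. W \<omega> v < c} \<in> sets borel" by measurable
  ultimately show "{v. W \<omega> v \<le> c} \<in> sets borel" "{v. W \<omega> v < c} \<in> sets borel" by simp_all
qed

lemma phi_le_zero:
  assumes "c < Fp (X \<omega>)" "c \<le> Fm (X \<omega>)"
  shows "emeasure P01 {v. W \<omega> v \<le> c} = 0"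
proof -
  have "{v. W \<omega> v \<le> c} \<inter> {0..1} \<subseteq> {0}"
  proof (intro subsetI)
    fix v assume "v \<in> {v. W \<omega> v \<le> c} \<inter> {0..1}"
    hence v: "W \<omega> v \<le> c" "0 \<le> v" "v \<le> 1" by auto
    have d0: "0 \<le> Fp (X \<omega>) - Fm (X \<omega>)" using Fm_le_Fp[of "X \<omega>"] by simp
    have "v * (Fp (X \<omega>) - Fm (X \<omega>)) \<le> 0" using W_01[of v \<omega>] assms v by simp
    moreover have "0 \<le> v * (Fp (X \<omega>) - Fm (X \<omega>))" using v d0 by simp
    ultimately have z: "v * (Fp (X \<omega>) - Fm (X \<omega>)) = 0" by linarith
    have "W \<omega> v = Fm (X \<omega>)" using W_01[of v \<omega>] v z by simp
    hence "Fm (X \<omega>) = c" using v(1) assms(2) by simp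
    hence "Fp (X \<omega>) - Fm (X \<omega>) > 0" using assms by simp
    hence "v = 0" using z by simp
    thus "v \<in> {0}" by simp
  qed
  hence "emeasure lborel ({v. W \<omega> v \<le> c} \<inter> {0..1}) \<le> emeasure lborel {0::real}"
    by (intro emeasure_mono) auto
  thus ?thesis by (simp add: emeasure_P01)
qed

lemma phi_le_r:
  assumes "Fm (X \<omega>) < c" "c < Fp (X \<omega>)"
  shows "emeasure P01 {v. W \<omega> v \<le> c} \<le> ennreal ((c - Fm (X \<omega>)) / (Fp (X \<omega>) - Fm (X \<omega>)))"
proof -
  define r where "r = (c - Fm (X \<omega>)) / (Fp (X \<omega>) - Fm (X \<omega>))"
  have d: "Fp (X \<omega>) - Fm (X \<omega>) > 0" using assms by simp
  have r0: "0 \<le> r" using assms d by (simp add: r_def)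
  have "{v. W \<omega> v \<le> c} \<inter> {0..1} \<subseteq> {0..r}"
  proof (intro subsetI)
    fix v assume "v \<in> {v. W \<omega> v \<le> c} \<inter> {0..1}"
    hence v: "W \<omega> v \<le> c" "0 \<le> v" "v \<le> 1" by auto
    hence "v * (Fp (X \<omega>) - Fm (X \<omega>)) \<le> c - Fm (X \<omega>)" using W_01[of v \<omega>] by simp
    hence "v \<le> r" using d by (simp add: r_def pos_le_divide_eq)
    thus "v \<in> {0..r}" using v by simp
  qed
  hence "emeasure lborel ({v. W \<omega> v \<le> c} \<inter> {0..1}) \<le> emeasure lborel {0..r}"
    by (intro emeasure_mono) auto
  thus ?thesis using r0 by (simp add: emeasure_P01 r_def)
qed

lemma psi_one:
  assumes "Fp (X \<omega>) < c"
  shows "emeasure P01 {v. W \<omega> v < c} = 1"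
proof -
  have "{v. W \<omega> v < c} = UNIV" using W_le[of \<omega>] assms by (auto intro: le_less_trans)
  thus ?thesis using prob_space.emeasure_space_1[OF prob_space_P01] by (simp add: space_P01)
qed

lemma psi_ge_r:
  assumes "Fm (X \<omega>) < c" "c \<le> Fp (X \<omega>)"
  shows "ennreal ((c - Fm (X \<omega>)) / (Fp (X \<omega>) - Fm (X \<omega>))) \<le> emeasure P01 {v. W \<omega> v < c}"
proof -
  define r where "r = (c - Fm (X \<omega>)) / (Fp (X \<omega>) - Fm (X \<omega>))"
  have d: "Fp (X \<omega>) - Fm (X \<omega>) > 0" using assms by simp
  have r0: "0 \<le> r" "r \<le> 1" using assms d by (auto simp: r_def divide_le_eq_1)
  have "{0..<r} \<subseteq> {v. W \<omega> v < c} \<inter> {0..1}"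
  proof (intro subsetI)
    fix v assume "v \<in> {0..<r}"
    hence v: "0 \<le> v" "v < r" by auto
    hence "v * (Fp (X \<omega>) - Fm (X \<omega>)) < r * (Fp (X \<omega>) - Fm (X \<omega>))" using d by simp
    also have "\<dots> = c - Fm (X \<omega>)" using d by (simp add: r_def)
    finally have "W \<omega> v < c" using W_01[of v \<omega>] v r0 by simp
    thus "v \<in> {v. W \<omega> v < c} \<inter> {0..1}" using v r0 by simp
  qed
  hence "emeasure lborel {0..<r} \<le> emeasure lborel ({v. W \<omega> v < c} \<inter> {0..1})"
    by (intro emeasure_mono) auto
  thus ?thesis using r0 by (simp add: emeasure_P01 r_def)
qed

lemma straddle_unique:
  assumes "Fm x < c" "c < Fp x" "Fm y < c" "c \<le> Fp y" shows "x \<le> y"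
proof (rule ccontr)
  assume "\<not> x \<le> y" hence "Fp y \<le> Fm x" by (intro Fp_le_Fm) simp
  thus False using assms by simp
qed

lemma meas_eq: "measure M {\<omega>\<in>space M. X \<omega> = x} = Fp x - Fm x"
proof -
  have "{\<omega>\<in>space M. X \<omega> = x} = {\<omega>\<in>space M. X \<omega> \<le> x} - {\<omega>\<in>space M. X \<omega> < x}" by auto
  moreover have "measure M ({\<omega>\<in>space M. X \<omega> \<le> x} - {\<omega>\<in>space M. X \<omega> < x})
     = measure M {\<omega>\<in>space M. X \<omega> \<le> x} - measure M {\<omega>\<in>space M. X \<omega> < x}"
    by (rule finite_measure_Diff) auto
  ultimately show ?thesis unfolding Fp_def Fm_def by simp
qed


lemma Q_prob: "prob_space (M \<Otimes>\<^sub>M P01)"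
  by (rule prob_space_pair[OF prob_space_axioms prob_space_P01])

lemma pair_int:
  assumes E: "E = {p \<in> space (M \<Otimes>\<^sub>M P01). P (W (fst p) (snd p))}"
    and [measurable]: "E \<in> sets (M \<Otimes>\<^sub>M P01)"
  shows "emeasure (M \<Otimes>\<^sub>M P01) E = (\<integral>\<^sup>+\<omega>. emeasure P01 {v. P (W \<omega> v)} \<partial>M)"
proof -
  interpret P: prob_space P01 by (rule prob_space_P01)
  have "emeasure (M \<Otimes>\<^sub>M P01) E = (\<integral>\<^sup>+\<omega>. emeasure P01 (Pair \<omega> -` E) \<partial>M)"
    by (rule P.emeasure_pair_measure_alt) fact
  also have "\<dots> = (\<integral>\<^sup>+\<omega>. emeasure P01 {v. P (W \<omega> v)} \<partial>M)"
    by (intro nn_integral_cong arg_cong[where f="emeasure P01"]) (auto simp: E space_pair_measure space_P01)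
  finally show ?thesis .
qed

lemma U1:
  assumes c: "0 \<le> c"
  shows "measure (M \<Otimes>\<^sub>M P01) {p \<in> space (M \<Otimes>\<^sub>M P01). W (fst p) (snd p) \<le> c} \<le> c"
proof -
  interpret P: prob_space P01 by (rule prob_space_P01)
  interpret Q: prob_space "M \<Otimes>\<^sub>M P01" by (rule Q_prob)
  define E where "E = {p \<in> space (M \<Otimes>\<^sub>M P01). W (fst p) (snd p) \<le> c}"
  have E[measurable]: "E \<in> sets (M \<Otimes>\<^sub>M P01)" unfolding E_def by measurable
  have "emeasure (M \<Otimes>\<^sub>M P01) E = (\<integral>\<^sup>+\<omega>. emeasure P01 {v. W \<omega> v \<le> c} \<partial>M)"
    by (rule pair_int[OF E_def E])
  also have "\<dots> \<le> ennreal c"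
  proof (cases "\<exists>x0. Fm x0 < c \<and> c < Fp x0")
    case False
    have "(\<integral>\<^sup>+\<omega>. emeasure P01 {v. W \<omega> v \<le> c} \<partial>M) \<le> (\<integral>\<^sup>+\<omega>. indicator {\<omega>\<in>space M. Fp (X \<omega>) \<le> c} \<omega> \<partial>M)"
    proof (intro nn_integral_mono)
      fix \<omega> assume \<omega>: "\<omega> \<in> space M"
      show "emeasure P01 {v. W \<omega> v \<le> c} \<le> indicator {\<omega>\<in>space M. Fp (X \<omega>) \<le> c} \<omega>"
      proof (cases "Fp (X \<omega>) \<le> c")
        case True then show ?thesis using \<omega> P.emeasure_le_1 by simp
      next
        case F: False
        have "c \<le> Fm (X \<omega>)"
        proof (rule ccontr)
          assume "\<not> c \<le> Fm (X \<omega>)"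
          hence "Fm (X \<omega>) < c" by simp
          moreover have "c < Fp (X \<omega>)" using F by simp
          ultimately show False using False by blast
        qed
        hence "emeasure P01 {v. W \<omega> v \<le> c} = 0" using F by (intro phi_le_zero) auto
        thus ?thesis by simp
      qed
    qed
    also have "\<dots> = emeasure M {\<omega>\<in>space M. Fp (X \<omega>) \<le> c}" by simp
    also have "\<dots> \<le> ennreal c" using L1[OF c] by (simp add: emeasure_eq_measure c)
    finally show ?thesis .
  next
    case True
    then obtain x0 where x0: "Fm x0 < c" "c < Fp x0" by auto
    define r where "r = (c - Fm x0) / (Fp x0 - Fm x0)"
    have r0: "0 \<le> r" using x0 by (simp add: r_def)
    have "(\<integral>\<^sup>+\<omega>. emeasure P01 {v. W \<omega> v \<le> c} \<partial>M) \<le>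
       (\<integral>\<^sup>+\<omega>. indicator {\<omega>\<in>space M. X \<omega> < x0} \<omega> + ennreal r * indicator {\<omega>\<in>space M. X \<omega> = x0} \<omega> \<partial>M)"
    proof (intro nn_integral_mono)
      fix \<omega> assume \<omega>: "\<omega> \<in> space M"
      consider "X \<omega> < x0" | "X \<omega> = x0" | "x0 < X \<omega>" by fastforce
      then show "emeasure P01 {v. W \<omega> v \<le> c} \<le> indicator {\<omega>\<in>space M. X \<omega> < x0} \<omega> + ennreal r * indicator {\<omega>\<in>space M. X \<omega> = x0} \<omega>"
      proof cases
        case 1 then show ?thesis using \<omega> P.emeasure_le_1 by simp
      next
        case 2 then show ?thesis using \<omega> phi_le_r[of \<omega> c] x0 by (simp add: r_def)
      next
        case 3
        have "Fp x0 \<le> Fm (X \<omega>)" using 3 by (rule Fp_le_Fm)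
        hence "emeasure P01 {v. W \<omega> v \<le> c} = 0" using x0 Fm_le_Fp[of "X \<omega>"] by (intro phi_le_zero) auto
        thus ?thesis by simp
      qed
    qed
    also have "\<dots> = emeasure M {\<omega>\<in>space M. X \<omega> < x0} + ennreal r * emeasure M {\<omega>\<in>space M. X \<omega> = x0}"
      by (subst nn_integral_add) (auto simp: nn_integral_cmult_indicator)
    also have "\<dots> = ennreal (Fm x0 + r * (Fp x0 - Fm x0))"
      using r0 Fm_ge0[of x0] Fm_le_Fp[of x0]
      by (simp add: emeasure_eq_measure meas_eq Fm_def[of x0, symmetric] ennreal_mult ennreal_plus)
    also have "Fm x0 + r * (Fp x0 - Fm x0) = c" using x0 by (simp add: r_def)
    finally show ?thesis by simp
  qed
  finally show ?thesis using c by (simp add: Q.emeasure_eq_measure E_def)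
qed

lemma U2:
  assumes c: "c \<le> 1"
  shows "c \<le> measure (M \<Otimes>\<^sub>M P01) {p \<in> space (M \<Otimes>\<^sub>M P01). W (fst p) (snd p) < c}"
proof (cases "c \<le> 0")
  case True thus ?thesis by (meson measure_nonneg order_trans)
next
  case cpos: False
  interpret P: prob_space P01 by (rule prob_space_P01)
  interpret Q: prob_space "M \<Otimes>\<^sub>M P01" by (rule Q_prob)
  define E where "E = {p \<in> space (M \<Otimes>\<^sub>M P01). W (fst p) (snd p) < c}"
  have E[measurable]: "E \<in> sets (M \<Otimes>\<^sub>M P01)" unfolding E_def by measurable
  have "emeasure (M \<Otimes>\<^sub>M P01) E = (\<integral>\<^sup>+\<omega>. emeasure P01 {v. W \<omega> v < c} \<partial>M)"
    by (rule pair_int[OF E_def E])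
  also have "ennreal c \<le> \<dots>"
  proof (cases "\<exists>x0. Fm x0 < c \<and> c \<le> Fp x0")
    case False
    have "ennreal c \<le> emeasure M {\<omega>\<in>space M. Fm (X \<omega>) < c}"
      using L2[OF c] by (simp add: emeasure_eq_measure)
    also have "\<dots> = (\<integral>\<^sup>+\<omega>. indicator {\<omega>\<in>space M. Fm (X \<omega>) < c} \<omega> \<partial>M)" by simp
    also have "\<dots> \<le> (\<integral>\<^sup>+\<omega>. emeasure P01 {v. W \<omega> v < c} \<partial>M)"
    proof (intro nn_integral_mono)
      fix \<omega> assume \<omega>: "\<omega> \<in> space M"
      show "indicator {\<omega>\<in>space M. Fm (X \<omega>) < c} \<omega> \<le> emeasure P01 {v. W \<omega> v < c}"
      proof (cases "Fm (X \<omega>) < c")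
        case True
        hence "Fp (X \<omega>) < c" using False by force
        thus ?thesis using psi_one[of \<omega> c] by (simp add: indicator_def)
      next
        case False thus ?thesis by simp
      qed
    qed
    finally show ?thesis .
  next
    case True
    then obtain x0 where x0: "Fm x0 < c" "c \<le> Fp x0" by auto
    define r where "r = (c - Fm x0) / (Fp x0 - Fm x0)"
    have r0: "0 \<le> r" using x0 by (simp add: r_def)
    have "ennreal c = ennreal (Fm x0 + r * (Fp x0 - Fm x0))" using x0 by (simp add: r_def)
    also have "\<dots> = emeasure M {\<omega>\<in>space M. X \<omega> < x0} + ennreal r * emeasure M {\<omega>\<in>space M. X \<omega> = x0}"
      using r0 Fm_ge0[of x0] Fm_le_Fp[of x0]
      by (simp add: emeasure_eq_measure meas_eq Fm_def[of x0, symmetric] ennreal_mult ennreal_plus)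
    also have "\<dots> = (\<integral>\<^sup>+\<omega>. indicator {\<omega>\<in>space M. X \<omega> < x0} \<omega> + ennreal r * indicator {\<omega>\<in>space M. X \<omega> = x0} \<omega> \<partial>M)"
      by (subst nn_integral_add) (auto simp: nn_integral_cmult_indicator)
    also have "\<dots> \<le> (\<integral>\<^sup>+\<omega>. emeasure P01 {v. W \<omega> v < c} \<partial>M)"
    proof (intro nn_integral_mono)
      fix \<omega> assume \<omega>: "\<omega> \<in> space M"
      consider "X \<omega> < x0" | "X \<omega> = x0" | "x0 < X \<omega>" by fastforce
      then show "indicator {\<omega>\<in>space M. X \<omega> < x0} \<omega> + ennreal r * indicator {\<omega>\<in>space M. X \<omega> = x0} \<omega> \<le> emeasure P01 {v. W \<omega> v < c}"
      proof cases
        case 1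
        have "Fp (X \<omega>) \<le> Fm x0" using 1 by (rule Fp_le_Fm)
        hence "Fp (X \<omega>) < c" using x0 by simp
        thus ?thesis using \<omega> 1 psi_one[of \<omega> c] by simp
      next
        case 2 then show ?thesis using \<omega> psi_ge_r[of \<omega> c] x0 by (simp add: r_def)
      next
        case 3 thus ?thesis using \<omega> by simp
      qed
    qed
    finally show ?thesis .
  qed
  finally show ?thesis by (simp add: Q.emeasure_eq_measure E_def)
qed

lemma U3:
  assumes ab: "a \<le> b"
  shows "measure (M \<Otimes>\<^sub>M P01) {p \<in> space (M \<Otimes>\<^sub>M P01). a \<le> W (fst p) (snd p) \<and> W (fst p) (snd p) \<le> b} \<le> b - a"
proof -
  interpret Q: prob_space "M \<Otimes>\<^sub>M P01" by (rule Q_prob)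
  define E1 where "E1 = {p \<in> space (M \<Otimes>\<^sub>M P01). W (fst p) (snd p) \<le> b}"
  define E2 where "E2 = {p \<in> space (M \<Otimes>\<^sub>M P01). W (fst p) (snd p) < a}"
  define E where "E = {p \<in> space (M \<Otimes>\<^sub>M P01). a \<le> W (fst p) (snd p) \<and> W (fst p) (snd p) \<le> b}"
  have [measurable]: "E1 \<in> sets (M \<Otimes>\<^sub>M P01)" "E2 \<in> sets (M \<Otimes>\<^sub>M P01)" "E \<in> sets (M \<Otimes>\<^sub>M P01)"
    unfolding E1_def E2_def E_def by measurable
  have W0: "0 \<le> W \<omega> v" for \<omega> v using W_ge[of \<omega> v] Fm_ge0[of "X \<omega>"] by simp
  have W1: "W \<omega> v \<le> 1" for \<omega> v using W_le[of \<omega> v] Fp_le1[of "X \<omega>"] by simp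
  have EE: "E = E1 - E2" using ab by (auto simp: E_def E1_def E2_def)
  have sub: "E2 \<subseteq> E1" using ab by (auto simp: E1_def E2_def)
  have mE: "measure (M \<Otimes>\<^sub>M P01) E = measure (M \<Otimes>\<^sub>M P01) E1 - measure (M \<Otimes>\<^sub>M P01) E2"
    unfolding EE by (rule Q.finite_measure_Diff) (use sub in auto)
  have "measure (M \<Otimes>\<^sub>M P01) E \<le> b - a"
  proof (cases "b < 0")
    case True
    hence "E = {}" using W0 by (auto simp: E_def intro: order.trans dest: order.strict_trans1)
    thus ?thesis using ab by simp
  next
    case b0: False
    show ?thesis
    proof (cases "1 < a")
      case True
      have "\<not> (a \<le> W \<omega> v)" for \<omega> v using True W1[of \<omega> v] by linarith
      hence "E = {}" by (auto simp: E_def)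
      thus ?thesis using ab by simp
    next
      case a1: False
      have m1: "measure (M \<Otimes>\<^sub>M P01) E1 \<le> b" unfolding E1_def using b0 by (intro U1) simp
      show ?thesis
      proof (cases "a \<le> 0")
        case True
        thus ?thesis using mE m1 measure_nonneg[of "M \<Otimes>\<^sub>M P01" E2] by linarith
      next
        case False
        have m2: "a \<le> measure (M \<Otimes>\<^sub>M P01) E2" unfolding E2_def using a1 by (intro U2) simp
        thus ?thesis using mE m1 by simp
      qed
    qed
  qed
  thus ?thesis by (simp add: E_def)
qed

end



definition lo :: "bool \<Rightarrow> real \<Rightarrow> nat \<Rightarrow> int" where
  "lo cl x m = (if cl then \<lceil>x * 2^m\<rceil> else \<lfloor>x * 2^m\<rfloor> + 1)"
definition hi :: "real \<Rightarrow> nat \<Rightarrow> int" where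
  "hi x m = \<lfloor>x * 2^m\<rfloor>"
definition Jset :: "bool \<Rightarrow> real \<Rightarrow> real \<Rightarrow> real set" where
  "Jset cl x y = (if cl then {x..y} else {x<..<y})"

lemma floor_double: fixes y :: real shows "2 * \<lfloor>y\<rfloor> \<le> \<lfloor>2 * y\<rfloor> \<and> \<lfloor>2 * y\<rfloor> \<le> 2 * \<lfloor>y\<rfloor> + 1"
proof -
  have a0: "2 * real_of_int \<lfloor>y\<rfloor> < real_of_int \<lfloor>2 * y\<rfloor> + 1"
    using of_int_floor_le[of y] floor_correct[of "2*y"] by linarith
  have b0: "real_of_int \<lfloor>2 * y\<rfloor> < 2 * real_of_int \<lfloor>y\<rfloor> + 2"
    using floor_correct[of y] of_int_floor_le[of "2*y"] by linarith
  have a: "real_of_int (2 * \<lfloor>y\<rfloor>) < real_of_int (\<lfloor>2 * y\<rfloor> + 1)" using a0 by simp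
  have b: "real_of_int \<lfloor>2 * y\<rfloor> < real_of_int (2 * \<lfloor>y\<rfloor> + 2)" using b0 by simp
  from a b show ?thesis unfolding of_int_less_iff by simp
qed

lemma ceiling_double: fixes y :: real shows "\<lceil>2 * y\<rceil> \<le> 2 * \<lceil>y\<rceil> \<and> 2 * \<lceil>y\<rceil> \<le> \<lceil>2 * y\<rceil> + 1"
proof -
  have a0: "real_of_int \<lceil>2 * y\<rceil> - 1 < 2 * real_of_int \<lceil>y\<rceil>"
    using le_of_int_ceiling[of y] ceiling_correct[of "2*y"] by linarith
  have b0: "2 * real_of_int \<lceil>y\<rceil> - 2 < real_of_int \<lceil>2 * y\<rceil>"
    using ceiling_correct[of y] le_of_int_ceiling[of "2*y"] by linarith
  have a: "real_of_int (\<lceil>2 * y\<rceil> - 1) < real_of_int (2 * \<lceil>y\<rceil>)" using a0 by simp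
  have b: "real_of_int (2 * \<lceil>y\<rceil> - 2) < real_of_int (\<lceil>2 * y\<rceil>)" using b0 by simp
  from a b show ?thesis unfolding of_int_less_iff by simp
qed

lemma pow_Suc_mult: "x * 2 ^ Suc m = 2 * (x * (2::real) ^ m)" by simp

lemma lo_step: "lo cl x (Suc m) \<le> 2 * lo cl x m \<and> 2 * lo cl x m \<le> lo cl x (Suc m) + 1"
  unfolding lo_def pow_Suc_mult using floor_double[of "x * 2^m"] ceiling_double[of "x * 2^m"] by auto

lemma hi_step: "2 * hi x m \<le> hi x (Suc m) \<and> hi x (Suc m) \<le> 2 * hi x m + 1"
  unfolding hi_def pow_Suc_mult using floor_double[of "x * 2^m"] by auto

lemma lo_ge: "x \<le> real_of_int (lo cl x m) / 2^m" "\<not> cl \<Longrightarrow> x < real_of_int (lo cl x m) / 2^m"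
proof -
  have "x * 2^m \<le> real_of_int (lo cl x m)" "\<not> cl \<Longrightarrow> x * 2^m < real_of_int (lo cl x m)"
    unfolding lo_def using ceiling_correct[of "x * 2^m"] floor_correct[of "x * 2^m"] by auto
  thus "x \<le> real_of_int (lo cl x m) / 2^m" "\<not> cl \<Longrightarrow> x < real_of_int (lo cl x m) / 2^m"
    by (simp_all add: field_simps)
qed

lemma lo_le: "real_of_int (lo cl x m - 1) / 2^m \<le> x" "cl \<Longrightarrow> real_of_int (lo cl x m - 1) / 2^m < x"
proof -
  have "real_of_int (lo cl x m - 1) \<le> x * 2^m" "cl \<Longrightarrow> real_of_int (lo cl x m - 1) < x * 2^m"
    unfolding lo_def using ceiling_correct[of "x * 2^m"] floor_correct[of "x * 2^m"] by auto
  thus "real_of_int (lo cl x m - 1) / 2^m \<le> x" "cl \<Longrightarrow> real_of_int (lo cl x m - 1) / 2^m < x"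
    by (simp_all add: field_simps)
qed

lemma hi_le: "real_of_int (hi x m) / 2^m \<le> x"
proof -
  have "real_of_int (hi x m) \<le> x * 2^m" unfolding hi_def by simp
  thus ?thesis by (simp add: field_simps)
qed

lemma hi_gt: "x < real_of_int (hi x m + 1) / 2^m"
proof -
  have "x * 2^m < real_of_int (hi x m + 1)" unfolding hi_def using floor_correct[of "x * 2^m"] by simp
  thus ?thesis by (simp add: field_simps)
qed

lemma inner_J:
  assumes "real_of_int (lo cl x m) / 2^m \<le> t" "t < real_of_int (hi y m) / 2^m"
  shows "t \<in> Jset cl x y"
  using assms lo_ge[where x=x and cl=cl and m=m] hi_le[where x=y and m=m] by (auto simp: Jset_def)

lemma outer_J:
  assumes "t \<in> Jset cl x y"
  shows "real_of_int (lo cl x m - 1) / 2^m \<le> t" "t < real_of_int (hi y m + 1) / 2^m"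
  using assms lo_le[where x=x and cl=cl and m=m] hi_gt[where x=y and m=m] by (auto simp: Jset_def split: if_splits)

lemma lo_range: "0 \<le> x \<Longrightarrow> x \<le> 1 \<Longrightarrow> 0 \<le> lo cl x m \<and> lo cl x m \<le> 2^m + 1"
proof -
  assume x: "0 \<le> x" "x \<le> 1"
  have a: "0 \<le> x * 2^m" "x * 2^m \<le> 2^m" using x by (auto simp: mult_left_le_one_le)
  have "\<lceil>x * 2^m\<rceil> \<le> \<lceil>(2::real)^m\<rceil>" using a by (intro ceiling_mono)
  moreover have "\<lfloor>x * 2^m\<rfloor> \<le> \<lfloor>(2::real)^m\<rfloor>" using a by (intro floor_mono)
  moreover have "\<lceil>(2::real)^m\<rceil> = 2^m" "\<lfloor>(2::real)^m\<rfloor> = 2^m"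
    by (metis ceiling_of_int of_int_numeral of_int_power, metis floor_of_int of_int_numeral of_int_power)
  ultimately show ?thesis using a unfolding lo_def by auto
qed

lemma hi_range: "0 \<le> x \<Longrightarrow> x \<le> 1 \<Longrightarrow> 0 \<le> hi x m \<and> hi x m \<le> 2^m"
proof -
  assume x: "0 \<le> x" "x \<le> 1"
  have a: "0 \<le> x * 2^m" "x * 2^m \<le> 2^m" using x by (auto simp: mult_left_le_one_le)
  have "\<lfloor>x * 2^m\<rfloor> \<le> \<lfloor>(2::real)^m\<rfloor>" using a by (intro floor_mono)
  moreover have "\<lfloor>(2::real)^m\<rfloor> = 2^m"
    by (metis floor_of_int of_int_numeral of_int_power)
  ultimately show ?thesis using a unfolding hi_def by auto
qed




lemma devs_diff:
  assumes "finite_measure M" "A \<subseteq> B" "A \<in> sets M" "B \<in> sets M"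
  shows "devs M n B Y = devs M n A Y + devs M n (B - A) Y"
proof -
  interpret finite_measure M by fact
  have m: "measure M (B - A) = measure M B - measure M A"
    using assms by (intro finite_measure_Diff) auto
  have "(\<Sum>i<n. indicator B (Y i)) = (\<Sum>i<n. indicator A (Y i) + indicator (B - A) (Y i) :: real)"
    using assms(2) by (intro sum.cong) (auto simp: indicator_def)
  hence s: "(\<Sum>i<n. indicator B (Y i)) = (\<Sum>i<n. indicator A (Y i)) + (\<Sum>i<n. indicator (B - A) (Y i) :: real)"
    by (simp add: sum.distrib)
  show ?thesis unfolding devs_sum m s by (simp add: add_divide_distrib)
qed

lemma devs_rem:
  assumes "finite_measure M" "A \<subseteq> B" "A \<in> sets M" "B \<in> sets M"
  shows "\<bar>devs M n A Y\<bar> \<le> measure M B + \<bar>devs M n B Y\<bar>"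
proof -
  interpret finite_measure M by fact
  have mA: "0 \<le> measure M A" "measure M A \<le> measure M B"
    using assms by (auto intro: finite_measure_mono)
  have "(\<Sum>i<n. indicator A (Y i)) \<le> (\<Sum>i<n. indicator B (Y i) :: real)"
    using assms(2) by (intro sum_mono) (auto simp: indicator_def)
  hence eA: "(\<Sum>i<n. indicator A (Y i)) / real n \<le> (\<Sum>i<n. indicator B (Y i) :: real) / real n"
    by (simp add: divide_right_mono)
  have eA0: "0 \<le> (\<Sum>i<n. indicator A (Y i) :: real) / real n" by (simp add: sum_nonneg)
  define a where "a = measure M A"
  define b where "b = measure M B"
  define e where "e = (\<Sum>i<n. indicator A (Y i) :: real) / real n"
  define f where "f = (\<Sum>i<n. indicator B (Y i) :: real) / real n"
  have "f - b \<le> \<bar>b - f\<bar>" by simp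
  hence "\<bar>a - e\<bar> \<le> b + \<bar>b - f\<bar>" using mA eA eA0 unfolding a_def b_def e_def f_def abs_le_iff by linarith
  thus ?thesis unfolding devs_sum a_def b_def e_def f_def .
qed

locale chain = prob_space L for L :: "'b measure" +
  fixes U1 U2 :: "'b \<Rightarrow> real"
  assumes U1m[measurable]: "U1 \<in> borel_measurable L" and U2m[measurable]: "U2 \<in> borel_measurable L"
  and strip1: "\<And>a b. a \<le> b \<Longrightarrow> measure L {\<omega>\<in>space L. a \<le> U1 \<omega> \<and> U1 \<omega> \<le> b} \<le> b - a"
  and strip2: "\<And>a b. a \<le> b \<Longrightarrow> measure L {\<omega>\<in>space L. a \<le> U2 \<omega> \<and> U2 \<omega> \<le> b} \<le> b - a"
begin

definition Bx :: "nat \<Rightarrow> int \<Rightarrow> int \<Rightarrow> int \<Rightarrow> int \<Rightarrow> 'b set" where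
  "Bx m a b c d = {\<omega>\<in>space L. real_of_int a / 2^m \<le> U1 \<omega> \<and> U1 \<omega> < real_of_int b / 2^m
      \<and> real_of_int c / 2^m \<le> U2 \<omega> \<and> U2 \<omega> < real_of_int d / 2^m}"

lemma Bx_sets[measurable]: "Bx m a b c d \<in> sets L" unfolding Bx_def by measurable

lemma Bx_empty: "Bx m 0 0 0 0 = {}" by (auto simp: Bx_def)

lemma Bx_scale: "Bx (Suc m) (2*a) (2*b) (2*c) (2*d) = Bx m a b c d"
  by (simp add: Bx_def)

lemma dyle: "x \<le> y \<Longrightarrow> real_of_int x / 2^m \<le> real_of_int y / (2::real)^m"
  by (simp add: divide_right_mono)

lemma Bx_mono: "a \<le> a' \<Longrightarrow> b' \<le> b \<Longrightarrow> c \<le> c' \<Longrightarrow> d' \<le> d \<Longrightarrow> Bx m a' b' c' d' \<subseteq> Bx m a b c d"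
  unfolding Bx_def using dyle[of a a' m] dyle[of b' b m] dyle[of c c' m] dyle[of d' d m] by auto

definition Idx :: "nat \<Rightarrow> int set" where "Idx m = {-1 .. 2^m + 2}"

definition Cand :: "nat \<Rightarrow> 'b set set" where
  "Cand m = (\<lambda>((a,b,c,d),(a',b',c',d')). Bx m a b c d - Bx m a' b' c' d') `
     ((Idx m \<times> Idx m \<times> Idx m \<times> Idx m) \<times> (Idx m \<times> Idx m \<times> Idx m \<times> Idx m))"

definition Fam :: "nat \<Rightarrow> 'b set set" where
  "Fam m = {D \<in> Cand m. measure L D \<le> 4 / 2^m}"

lemma card_Idx: "card (Idx m) = 2^m + 4"
proof -
  have "card (Idx m) = nat (2^m + 2 - (-1) + 1)" unfolding Idx_def by simp
  also have "\<dots> = 2^m + 4" by (simp add: nat_add_distrib nat_power_eq)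
  finally show ?thesis .
qed

lemma Cand_finite: "finite (Cand m)"
  unfolding Cand_def Idx_def by simp

lemma card_Cand: "card (Cand m) \<le> (2^m + 4)^8"
proof -
  have "card (Cand m) \<le> card ((Idx m \<times> Idx m \<times> Idx m \<times> Idx m) \<times> (Idx m \<times> Idx m \<times> Idx m \<times> Idx m))"
    unfolding Cand_def by (rule card_image_le) (simp add: Idx_def)
  also have "\<dots> = (2^m + 4)^8" by (simp add: card_cartesian_product card_Idx power_def)
  finally show ?thesis .
qed

lemma Fam_finite: "finite (Fam m)" unfolding Fam_def using Cand_finite by simp
lemma Fam_sets: "Fam m \<subseteq> sets L" unfolding Fam_def Cand_def by auto
lemma Fam_meas: "D \<in> Fam m \<Longrightarrow> measure L D \<le> 4 / 2^m" unfolding Fam_def by simp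
lemma card_Fam: "card (Fam m) \<le> (2^m + 4)^8"
proof -
  have "card (Fam m) \<le> card (Cand m)" unfolding Fam_def by (rule card_mono[OF Cand_finite]) auto
  thus ?thesis using card_Cand[of m] by simp
qed

lemma idx_in: "-1 \<le> a \<Longrightarrow> a \<le> 2^m + 2 \<Longrightarrow> a \<in> Idx m" by (simp add: Idx_def)

lemma in_Fam:
  assumes "a \<in> Idx m" "b \<in> Idx m" "c \<in> Idx m" "d \<in> Idx m" "a' \<in> Idx m" "b' \<in> Idx m" "c' \<in> Idx m" "d' \<in> Idx m"
    and "measure L (Bx m a b c d - Bx m a' b' c' d') \<le> 4 / 2^m"
  shows "Bx m a b c d - Bx m a' b' c' d' \<in> Fam m"
  unfolding Fam_def Cand_def using assms by (auto intro!: image_eqI[where x="((a,b,c,d),(a',b',c',d'))"])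

lemma Fam_ne: "Fam m \<noteq> {}"
proof -
  have "Bx m 0 0 0 0 - Bx m 0 0 0 0 \<in> Fam m" by (rule in_Fam) (auto simp: Idx_def Bx_empty)
  thus ?thesis by auto
qed

lemma strip:
  assumes "a \<le> a'" "a' \<le> a + 1" "b - 1 \<le> b'" "b' \<le> b" "c \<le> c'" "c' \<le> c + 1" "d - 1 \<le> d'" "d' \<le> d"
  shows "measure L (Bx m a b c d - Bx m a' b' c' d') \<le> 4 / 2^m"
proof -
  define S1 where "S1 = {\<omega>\<in>space L. real_of_int a / 2^m \<le> U1 \<omega> \<and> U1 \<omega> \<le> real_of_int (a + 1) / 2^m}"
  define S2 where "S2 = {\<omega>\<in>space L. real_of_int (b - 1) / 2^m \<le> U1 \<omega> \<and> U1 \<omega> \<le> real_of_int b / 2^m}"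
  define S3 where "S3 = {\<omega>\<in>space L. real_of_int c / 2^m \<le> U2 \<omega> \<and> U2 \<omega> \<le> real_of_int (c + 1) / 2^m}"
  define S4 where "S4 = {\<omega>\<in>space L. real_of_int (d - 1) / 2^m \<le> U2 \<omega> \<and> U2 \<omega> \<le> real_of_int d / 2^m}"
  have [measurable]: "S1 \<in> sets L" "S2 \<in> sets L" "S3 \<in> sets L" "S4 \<in> sets L"
    unfolding S1_def S2_def S3_def S4_def by measurable
  have h1: "real_of_int a' / 2^m \<le> real_of_int (a + 1) / 2^m" using assms by (intro dyle) simp
  have h2: "real_of_int (b - 1) / 2^m \<le> real_of_int b' / 2^m" using assms by (intro dyle) simp
  have h3: "real_of_int c' / 2^m \<le> real_of_int (c + 1) / 2^m" using assms by (intro dyle) simp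
  have h4: "real_of_int (d - 1) / 2^m \<le> real_of_int d' / 2^m" using assms by (intro dyle) simp
  have sub: "Bx m a b c d - Bx m a' b' c' d' \<subseteq> S1 \<union> S2 \<union> S3 \<union> S4"
  proof
    fix \<omega> assume "\<omega> \<in> Bx m a b c d - Bx m a' b' c' d'"
    hence w: "\<omega> \<in> space L" "real_of_int a / 2^m \<le> U1 \<omega>" "U1 \<omega> < real_of_int b / 2^m"
      "real_of_int c / 2^m \<le> U2 \<omega>" "U2 \<omega> < real_of_int d / 2^m"
      and nw: "\<not> (real_of_int a' / 2^m \<le> U1 \<omega> \<and> U1 \<omega> < real_of_int b' / 2^m
      \<and> real_of_int c' / 2^m \<le> U2 \<omega> \<and> U2 \<omega> < real_of_int d' / 2^m)"
      unfolding Bx_def by auto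
    from nw consider "U1 \<omega> < real_of_int a' / 2^m" | "real_of_int b' / 2^m \<le> U1 \<omega>"
      | "U2 \<omega> < real_of_int c' / 2^m" | "real_of_int d' / 2^m \<le> U2 \<omega>" by linarith
    thus "\<omega> \<in> S1 \<union> S2 \<union> S3 \<union> S4"
    proof cases
      case 1 hence "\<omega> \<in> S1" using w h1 by (simp add: S1_def) thus ?thesis by simp
    next
      case 2 hence "\<omega> \<in> S2" using w h2 by (simp add: S2_def) thus ?thesis by simp
    next
      case 3 hence "\<omega> \<in> S3" using w h3 by (simp add: S3_def) thus ?thesis by simp
    next
      case 4 hence "\<omega> \<in> S4" using w h4 by (simp add: S4_def) thus ?thesis by simp
    qed
  qed
  have one: "real_of_int (x + 1) / 2^m - real_of_int x / 2^m = 1 / (2::real)^m" for x :: int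
    by (simp add: diff_divide_distrib[symmetric])
  have m1: "measure L S1 \<le> 1 / 2^m" unfolding S1_def using strip1[OF dyle[of a "a+1" m]] one[of a] by simp
  have m2: "measure L S2 \<le> 1 / 2^m" unfolding S2_def using strip1[OF dyle[of "b-1" b m]] one[of "b-1"] by simp
  have m3: "measure L S3 \<le> 1 / 2^m" unfolding S3_def using strip2[OF dyle[of c "c+1" m]] one[of c] by simp
  have m4: "measure L S4 \<le> 1 / 2^m" unfolding S4_def using strip2[OF dyle[of "d-1" d m]] one[of "d-1"] by simp
  have "measure L (Bx m a b c d - Bx m a' b' c' d') \<le> measure L (S1 \<union> S2 \<union> S3 \<union> S4)"
    using sub by (intro finite_measure_mono) auto
  also have "\<dots> \<le> measure L S1 + measure L S2 + measure L S3 + measure L S4"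
    by (intro order.trans[OF measure_Un_le] add_mono order_refl) auto
  also have "\<dots> \<le> 4 / 2^m" using m1 m2 m3 m4 by simp
  finally show ?thesis .
qed

end



context chain begin

definition Em :: "bool \<Rightarrow> real \<Rightarrow> real \<Rightarrow> real \<Rightarrow> real \<Rightarrow> nat \<Rightarrow> 'b set" where
  "Em cl x1 y1 x2 y2 m = Bx m (lo cl x1 m) (hi y1 m) (lo cl x2 m) (hi y2 m)"

definition Dm :: "bool \<Rightarrow> real \<Rightarrow> real \<Rightarrow> real \<Rightarrow> real \<Rightarrow> nat \<Rightarrow> 'b set" where
  "Dm cl x1 y1 x2 y2 m = (case m of 0 \<Rightarrow> Em cl x1 y1 x2 y2 0
      | Suc k \<Rightarrow> Em cl x1 y1 x2 y2 (Suc k) - Em cl x1 y1 x2 y2 k)"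

definition Rst :: "bool \<Rightarrow> real \<Rightarrow> real \<Rightarrow> real \<Rightarrow> real \<Rightarrow> 'b set" where
  "Rst cl x1 y1 x2 y2 = {\<omega>\<in>space L. U1 \<omega> \<in> Jset cl x1 y1 \<and> U2 \<omega> \<in> Jset cl x2 y2}"

definition Bk :: "bool \<Rightarrow> real \<Rightarrow> real \<Rightarrow> real \<Rightarrow> real \<Rightarrow> nat \<Rightarrow> 'b set" where
  "Bk cl x1 y1 x2 y2 K = Bx K (lo cl x1 K - 1) (hi y1 K + 1) (lo cl x2 K - 1) (hi y2 K + 1)"

lemma Jset_borel[measurable]: "Jset cl x y \<in> sets borel" by (simp add: Jset_def)
lemma Rst_sets[measurable]: "Rst cl x1 y1 x2 y2 \<in> sets L" unfolding Rst_def by measurable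
lemma Em_sets[measurable]: "Em cl x1 y1 x2 y2 m \<in> sets L" unfolding Em_def by measurable
lemma Bk_sets[measurable]: "Bk cl x1 y1 x2 y2 m \<in> sets L" unfolding Bk_def by measurable

lemma Em_sub: "Em cl x1 y1 x2 y2 m \<subseteq> Rst cl x1 y1 x2 y2"
  unfolding Em_def Bx_def Rst_def by (auto intro: inner_J)

lemma Em_Suc: "Em cl x1 y1 x2 y2 m = Bx (Suc m) (2 * lo cl x1 m) (2 * hi y1 m) (2 * lo cl x2 m) (2 * hi y2 m)"
  unfolding Em_def by (simp add: Bx_scale)

lemma Em_mono: "Em cl x1 y1 x2 y2 m \<subseteq> Em cl x1 y1 x2 y2 (Suc m)"
  unfolding Em_Suc[of cl x1 y1 x2 y2 m] Em_def[of cl x1 y1 x2 y2 "Suc m"]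
  using lo_step[of cl x1 m] hi_step[of y1 m] lo_step[of cl x2 m] hi_step[of y2 m]
  by (intro Bx_mono) auto

lemma Rst_sub_Bk: "Rst cl x1 y1 x2 y2 \<subseteq> Bk cl x1 y1 x2 y2 K"
  unfolding Rst_def Bk_def Bx_def
  using outer_J[where cl=cl and x=x1 and y=y1 and m=K] outer_J[where cl=cl and x=x2 and y=y2 and m=K] by auto

lemma Dm_Fam:
  assumes xs: "0 \<le> x1" "x1 \<le> 1" "0 \<le> y1" "y1 \<le> 1" "0 \<le> x2" "x2 \<le> 1" "0 \<le> y2" "y2 \<le> 1"
  shows "Dm cl x1 y1 x2 y2 m \<in> Fam m"
proof (cases m)
  case 0
  have "Dm cl x1 y1 x2 y2 m = Bx 0 (lo cl x1 0) (hi y1 0) (lo cl x2 0) (hi y2 0) - Bx 0 0 0 0 0"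
    by (simp add: Dm_def Em_def Bx_empty 0)
  moreover have "Bx 0 (lo cl x1 0) (hi y1 0) (lo cl x2 0) (hi y2 0) - Bx 0 0 0 0 0 \<in> Fam 0"
    using lo_range[OF xs(1,2), of cl 0] hi_range[OF xs(3,4), of 0]
      lo_range[OF xs(5,6), of cl 0] hi_range[OF xs(7,8), of 0]
    by (intro in_Fam) (auto simp: Idx_def intro: order.trans[OF prob_le_1])
  ultimately show ?thesis using 0 by simp
next
  case (Suc k)
  have eq: "Dm cl x1 y1 x2 y2 (Suc k) = Bx (Suc k) (lo cl x1 (Suc k)) (hi y1 (Suc k)) (lo cl x2 (Suc k)) (hi y2 (Suc k))
      - Bx (Suc k) (2 * lo cl x1 k) (2 * hi y1 k) (2 * lo cl x2 k) (2 * hi y2 k)"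
    by (simp add: Dm_def Em_Suc[of cl x1 y1 x2 y2 k]) (simp add: Em_def)
  have r: "0 \<le> lo cl x1 k \<and> lo cl x1 k \<le> 2^k + 1" "0 \<le> hi y1 k \<and> hi y1 k \<le> 2^k"
       "0 \<le> lo cl x2 k \<and> lo cl x2 k \<le> 2^k + 1" "0 \<le> hi y2 k \<and> hi y2 k \<le> 2^k"
       "0 \<le> lo cl x1 (Suc k) \<and> lo cl x1 (Suc k) \<le> 2^Suc k + 1" "0 \<le> hi y1 (Suc k) \<and> hi y1 (Suc k) \<le> 2^Suc k"
       "0 \<le> lo cl x2 (Suc k) \<and> lo cl x2 (Suc k) \<le> 2^Suc k + 1" "0 \<le> hi y2 (Suc k) \<and> hi y2 (Suc k) \<le> 2^Suc k"
    using lo_range[OF xs(1,2)] hi_range[OF xs(3,4)] lo_range[OF xs(5,6)] hi_range[OF xs(7,8)] by blast+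
  have st: "lo cl x1 (Suc k) \<le> 2 * lo cl x1 k \<and> 2 * lo cl x1 k \<le> lo cl x1 (Suc k) + 1"
     "2 * hi y1 k \<le> hi y1 (Suc k) \<and> hi y1 (Suc k) \<le> 2 * hi y1 k + 1"
     "lo cl x2 (Suc k) \<le> 2 * lo cl x2 k \<and> 2 * lo cl x2 k \<le> lo cl x2 (Suc k) + 1"
     "2 * hi y2 k \<le> hi y2 (Suc k) \<and> hi y2 (Suc k) \<le> 2 * hi y2 k + 1"
    using lo_step hi_step by blast+
  show ?thesis unfolding Suc eq
    using r st by (intro in_Fam strip) (auto simp: Idx_def)
qed

lemma Bk_Fam:
  assumes xs: "0 \<le> x1" "x1 \<le> 1" "0 \<le> y1" "y1 \<le> 1" "0 \<le> x2" "x2 \<le> 1" "0 \<le> y2" "y2 \<le> 1"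
  shows "Bk cl x1 y1 x2 y2 K - Em cl x1 y1 x2 y2 K \<in> Fam K"
proof -
  have r: "0 \<le> lo cl x1 K \<and> lo cl x1 K \<le> 2^K + 1" "0 \<le> hi y1 K \<and> hi y1 K \<le> 2^K"
       "0 \<le> lo cl x2 K \<and> lo cl x2 K \<le> 2^K + 1" "0 \<le> hi y2 K \<and> hi y2 K \<le> 2^K"
    using lo_range[OF xs(1,2)] hi_range[OF xs(3,4)] lo_range[OF xs(5,6)] hi_range[OF xs(7,8)] by blast+
  show ?thesis unfolding Bk_def Em_def
    using r by (intro in_Fam strip) (auto simp: Idx_def)
qed

lemma tele: "\<bar>devs L n (Em cl x1 y1 x2 y2 K) Y\<bar> \<le> (\<Sum>m\<le>K. \<bar>devs L n (Dm cl x1 y1 x2 y2 m) Y\<bar>)"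
proof (induction K)
  case 0 thus ?case by (simp add: Dm_def)
next
  case (Suc K)
  have "devs L n (Em cl x1 y1 x2 y2 (Suc K)) Y = devs L n (Em cl x1 y1 x2 y2 K) Y + devs L n (Dm cl x1 y1 x2 y2 (Suc K)) Y"
    unfolding Dm_def by (simp, intro devs_diff finite_measure Em_mono Em_sets)
  hence "\<bar>devs L n (Em cl x1 y1 x2 y2 (Suc K)) Y\<bar> \<le> \<bar>devs L n (Em cl x1 y1 x2 y2 K) Y\<bar> + \<bar>devs L n (Dm cl x1 y1 x2 y2 (Suc K)) Y\<bar>"
    by simp
  thus ?case using Suc.IH by simp
qed

lemma chain_bound:
  assumes xs: "0 \<le> x1" "x1 \<le> 1" "0 \<le> y1" "y1 \<le> 1" "0 \<le> x2" "x2 \<le> 1" "0 \<le> y2" "y2 \<le> 1"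
    and n: "n > 0" and s: "\<And>m. s m > 0"
  shows "\<bar>devs L n (Rst cl x1 y1 x2 y2) Y\<bar> \<le> (\<Sum>m\<le>K. Gf L n (Fam m) (s m) (4 / 2^m) Y)
           + Gf L n (Fam K) (s K) (4 / 2^K) Y + 4 / 2^K"
proof -
  define E where "E = Em cl x1 y1 x2 y2 K"
  define R where "R = Rst cl x1 y1 x2 y2"
  define B where "B = Bk cl x1 y1 x2 y2 K"
  have [measurable]: "E \<in> sets L" "R \<in> sets L" "B \<in> sets L" unfolding E_def R_def B_def by measurable
  have ER: "E \<subseteq> R" unfolding E_def R_def by (rule Em_sub)
  have RB: "R \<subseteq> B" unfolding B_def R_def by (rule Rst_sub_Bk)
  have "devs L n R Y = devs L n E Y + devs L n (R - E) Y"
    by (rule devs_diff[OF finite_measure ER]) auto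
  hence "\<bar>devs L n R Y\<bar> \<le> \<bar>devs L n E Y\<bar> + \<bar>devs L n (R - E) Y\<bar>" by simp
  also have "\<bar>devs L n E Y\<bar> \<le> (\<Sum>m\<le>K. Gf L n (Fam m) (s m) (4 / 2^m) Y)"
  proof -
    have "\<bar>devs L n E Y\<bar> \<le> (\<Sum>m\<le>K. \<bar>devs L n (Dm cl x1 y1 x2 y2 m) Y\<bar>)" unfolding E_def by (rule tele)
    also have "\<dots> \<le> (\<Sum>m\<le>K. Gf L n (Fam m) (s m) (4 / 2^m) Y)"
      by (intro sum_mono Gf_ge Fam_finite Dm_Fam xs s n)
    finally show ?thesis .
  qed
  also have "\<bar>devs L n (R - E) Y\<bar> \<le> measure L (B - E) + \<bar>devs L n (B - E) Y\<bar>"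
    using RB by (intro devs_rem finite_measure) auto
  also have "measure L (B - E) \<le> 4 / 2^K"
    unfolding B_def E_def by (intro Fam_meas Bk_Fam xs)
  also have "\<bar>devs L n (B - E) Y\<bar> \<le> Gf L n (Fam K) (s K) (4 / 2^K) Y"
    unfolding B_def E_def by (intro Gf_ge Fam_finite Bk_Fam xs s n)
  finally show ?thesis by (simp add: R_def)
qed

end



lemma geo1: "(\<Sum>m<k. (8 * real m + 26) * (2/3)^m) = 126 - (24 * real k + 126) * (2/3::real)^k"
  by (induction k) (simp_all add: algebra_simps)

lemma geo2: "(\<Sum>m<k. (3/4::real)^m) = 4 - 4 * (3/4)^k"
  by (induction k) (simp_all add: algebra_simps)

lemma dec26: "(8 * real k + 26) * (2/3::real)^k \<le> 26"
proof (induction k)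
  case 0 thus ?case by simp
next
  case (Suc k)
  have "(8 * real (Suc k) + 26) * (2/3::real)^Suc k = ((2/3) * (8 * real k + 34)) * (2/3)^k" by (simp add: field_simps)
  also have "\<dots> \<le> (8 * real k + 26) * (2/3)^k" by (intro mult_right_mono) auto
  finally show ?case using Suc by linarith
qed

lemma ln_card_bound:
  assumes "1 \<le> N" "N \<le> (2^m + 4)^8"
  shows "ln (2 * real N) + 1 \<le> 8 * real m + 26"
proof -
  have "(1::nat) \<le> 2^m" by simp
  moreover have "(2::nat)^(m+3) = 8 * 2^m" by (simp add: power_add)
  ultimately have "(2::nat)^m + 4 \<le> 2^(m+3)" by linarith
  hence "N \<le> (2^(m+3))^8" using assms(2) by (meson power_mono le_trans zero_le)
  hence "2 * N \<le> 2 * (2^(m+3))^8" by simp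
  also have "\<dots> = 2^(8*m + 25)" by (simp add: power_mult[symmetric] power_add algebra_simps)
  finally have "real (2 * N) \<le> 2 ^ (8*m+25)" by (metis of_nat_le_iff of_nat_numeral of_nat_power)
  hence "ln (2 * real N) \<le> ln (2 ^ (8*m+25))" using assms(1) by (intro ln_mono) auto
  also have "\<dots> = real (8*m+25) * ln 2" by (simp add: ln_realpow)
  also have "\<dots> \<le> real (8*m+25) * 1" using ln_le_minus_one[of 2] by (intro mult_left_mono) auto
  finally show ?thesis by simp
qed

lemma level_bound:
  assumes N: "1 \<le> N" "N \<le> (2^m + 4)^8" and n: "n > 0"
  defines "s \<equiv> 2 * (3/2)^m / sqrt (real n)"
  shows "(ln (2 * real N) + real n * (4 / 2^m) * s^2 + 1) / (s * real n)
     \<le> (8 * real m + 26) * (2/3)^m / (2 * sqrt n) + 8 * (3/4)^m / sqrt n"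
proof -
  have sn: "sqrt (real n) > 0" using n by simp
  have s0: "s > 0" unfolding s_def using sn by simp
  have snn: "s * real n = 2 * (3/2)^m * sqrt n" unfolding s_def using sn
    by (simp add: field_simps)
  have "(ln (2 * real N) + real n * (4 / 2^m) * s^2 + 1) / (s * real n)
      = (ln (2 * real N) + 1) / (s * real n) + (4 / 2^m) * s"
    using s0 n by (simp add: field_simps power2_eq_square)
  also have "(ln (2 * real N) + 1) / (s * real n) \<le> (8 * real m + 26) / (s * real n)"
    using ln_card_bound[OF N] s0 n by (intro divide_right_mono) auto
  also have "(8 * real m + 26) / (s * real n) = (8 * real m + 26) * (2/3)^m / (2 * sqrt n)"
    unfolding snn by (simp add: field_simps power_divide)
  also have "(4 / 2^m) * s = 8 * (3/4)^m / sqrt n"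
  proof -
    have "(4::real)^m = 2^m * 2^m" by (simp add: power_mult_distrib[symmetric])
    thus ?thesis unfolding s_def by (simp add: field_simps power_divide)
  qed
  finally show ?thesis by simp
qed

context chain begin

lemma Gf_meas:
  assumes F: "F \<subseteq> sets L" "finite F"
  shows "(\<lambda>Y. Gf L n F s P Y) \<in> borel_measurable (PiM {..<n} (\<lambda>_. L))"
proof -
  have [measurable]: "(\<lambda>Y. \<Sum>D\<in>F. exp (s * real n * devs L n D Y) + exp (- (s * real n * devs L n D Y)))
      \<in> borel_measurable (PiM {..<n} (\<lambda>_. L))"
  proof (rule borel_measurable_sum)
    fix D assume "D \<in> F"
    hence [measurable]: "D \<in> sets L" using F by auto
    show "(\<lambda>Y. exp (s * real n * devs L n D Y) + exp (- (s * real n * devs L n D Y))) \<in> borel_measurable (PiM {..<n} (\<lambda>_. L))"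
      by measurable
  qed
  show ?thesis unfolding Gf_def by measurable
qed

lemma Gf_nonneg: "n > 0 \<Longrightarrow> s > 0 \<Longrightarrow> 0 \<le> Gf L n (Fam m) s P Y"
proof -
  assume "n > 0" "s > 0"
  obtain D where "D \<in> Fam m" using Fam_ne by blast
  have "\<bar>devs L n D Y\<bar> \<le> Gf L n (Fam m) s P Y"
    by (rule Gf_ge[OF Fam_finite \<open>D \<in> Fam m\<close> \<open>s > 0\<close> \<open>n > 0\<close>])
  thus ?thesis by linarith
qed

lemma int_G:
  assumes n: "4 \<le> n"
  defines "K \<equiv> LEAST k. sqrt (real n) < 2 * (3/2)^Suc k"
  defines "s \<equiv> \<lambda>m. 2 * (3/2)^m / sqrt (real n)"
  shows "(\<integral>\<^sup>+Y. ennreal ((\<Sum>m\<le>K. Gf L n (Fam m) (s m) (4 / 2^m) Y) + Gf L n (Fam K) (s K) (4 / 2^K) Y + 4 / 2^K)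
            \<partial>PiM {..<n} (\<lambda>_. L)) \<le> ennreal (132 / sqrt (real n))"
proof -
  have n0: "n > 0" using n by simp
  have sn: "sqrt (real n) > 0" using n by simp
  have sq2: "2 \<le> sqrt (real n)" using n real_sqrt_le_mono[of 4 "real n"] by simp
  have ex: "\<exists>k. sqrt (real n) < 2 * (3/2)^Suc k"
  proof -
    obtain k where "sqrt (real n) < (3/2::real)^k" using real_arch_pow[of "3/2" "sqrt (real n)"] by auto
    moreover have "2 * (3/2::real)^Suc k = 3 * (3/2)^k" by simp
    moreover have "(0::real) < (3/2)^k" by simp
    ultimately have "sqrt (real n) < 2 * (3/2)^Suc k" by linarith
    thus ?thesis by blast
  qed
  have K1: "sqrt (real n) < 2 * (3/2)^Suc K" unfolding K_def by (rule LeastI_ex[OF ex])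
  have Km: "2 * (3/2)^m \<le> sqrt (real n)" if "m \<le> K" for m
  proof (cases m)
    case 0 thus ?thesis using sq2 by simp
  next
    case (Suc j)
    hence "j < K" using that by simp
    hence "\<not> sqrt (real n) < 2 * (3/2)^Suc j" unfolding K_def by (rule not_less_Least)
    thus ?thesis using Suc by simp
  qed
  have s0: "s m > 0" for m unfolding s_def using sn by simp
  have s1: "s m \<le> 1" if "m \<le> K" for m unfolding s_def using Km[OF that] sn by simp
  define A where "A = (\<lambda>m. (8 * real m + 26) * (2/3)^m / (2 * sqrt n) + 8 * (3/4)^m / sqrt (real n))"
  have bnd: "(\<integral>\<^sup>+Y. ennreal (Gf L n (Fam m) (s m) (4 / 2^m) Y) \<partial>PiM {..<n} (\<lambda>_. L)) \<le> ennreal (A m)"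
    if "m \<le> K" for m
  proof -
    have cF: "1 \<le> card (Fam m)" using Fam_ne Fam_finite by (simp add: Suc_le_eq card_gt_0_iff)
    have "(\<integral>\<^sup>+Y. ennreal (Gf L n (Fam m) (s m) (4 / 2^m) Y) \<partial>PiM {..<n} (\<lambda>_. L))
       \<le> ennreal ((ln (2 * real (card (Fam m))) + real n * (4 / 2^m) * (s m)^2 + 1) / (s m * real n))"
      by (intro Gf_int prob_space_axioms Fam_finite Fam_ne Fam_sets Fam_meas s0 s1 that n0) auto
    also have "\<dots> \<le> ennreal (A m)"
      unfolding A_def s_def using level_bound[OF cF card_Fam n0] by (intro ennreal_leI) simp
    finally show ?thesis .
  qed
  have meas: "(\<lambda>Y. Gf L n (Fam m) (s m) (4 / 2^m) Y) \<in> borel_measurable (PiM {..<n} (\<lambda>_. L))" for m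
    by (intro Gf_meas Fam_sets Fam_finite)
  have nonneg: "0 \<le> Gf L n (Fam m) (s m) (4 / 2^m) Y" for m Y by (intro Gf_nonneg n0 s0)
  have "(\<integral>\<^sup>+Y. ennreal ((\<Sum>m\<le>K. Gf L n (Fam m) (s m) (4 / 2^m) Y) + Gf L n (Fam K) (s K) (4 / 2^K) Y + 4 / 2^K)
            \<partial>PiM {..<n} (\<lambda>_. L))
      = (\<integral>\<^sup>+Y. (\<Sum>m\<le>K. ennreal (Gf L n (Fam m) (s m) (4 / 2^m) Y)) + ennreal (Gf L n (Fam K) (s K) (4 / 2^K) Y) + ennreal (4 / 2^K)
            \<partial>PiM {..<n} (\<lambda>_. L))"
    by (intro nn_integral_cong) (simp add: nonneg sum_nonneg ennreal_plus sum_ennreal)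
  also have "\<dots> = (\<Sum>m\<le>K. (\<integral>\<^sup>+Y. ennreal (Gf L n (Fam m) (s m) (4 / 2^m) Y) \<partial>PiM {..<n} (\<lambda>_. L)))
       + (\<integral>\<^sup>+Y. ennreal (Gf L n (Fam K) (s K) (4 / 2^K) Y) \<partial>PiM {..<n} (\<lambda>_. L)) + ennreal (4 / 2^K)"
  proof -
    interpret PM: prob_space "PiM {..<n} (\<lambda>_. L)" by (intro prob_space_PiM prob_space_axioms)
    show ?thesis using meas
      by (simp add: nn_integral_add nn_integral_sum PM.emeasure_space_1)
  qed
  also have "\<dots> \<le> (\<Sum>m\<le>K. ennreal (A m)) + ennreal (A K) + ennreal (4 / 2^K)"
    by (intro add_mono sum_mono bnd order_refl) auto
  also have "\<dots> = ennreal ((\<Sum>m\<le>K. A m) + A K + 4 / 2^K)"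
  proof -
    have A0: "0 \<le> A m" for m unfolding A_def using sn by simp
    thus ?thesis by (simp add: ennreal_plus sum_nonneg)
  qed
  also have "(\<Sum>m\<le>K. A m) + A K + 4 / 2^K \<le> 132 / sqrt (real n)"
  proof -
    have S1: "(\<Sum>m\<le>K. (8 * real m + 26) * (2/3)^m) \<le> 126"
      using geo1[of "Suc K"] by (simp add: lessThan_Suc_atMost)
    have S2: "(\<Sum>m\<le>K. (3/4::real)^m) \<le> 4"
      using geo2[of "Suc K"] by (simp add: lessThan_Suc_atMost)
    have "(\<Sum>m\<le>K. A m) = (\<Sum>m\<le>K. (8 * real m + 26) * (2/3)^m) / (2 * sqrt n) + 8 * (\<Sum>m\<le>K. (3/4::real)^m) / sqrt n"
      unfolding A_def by (simp add: sum.distrib sum_divide_distrib sum_distrib_left)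
    also have "\<dots> \<le> 126 / (2 * sqrt n) + 8 * 4 / sqrt n"
      using S1 S2 sn by (intro add_mono divide_right_mono mult_left_mono) auto
    finally have T1: "(\<Sum>m\<le>K. A m) \<le> 95 / sqrt n" by simp
    have "A K \<le> 26 / (2 * sqrt n) + 8 * 1 / sqrt n"
      unfolding A_def using dec26[of K] sn by (intro add_mono divide_right_mono mult_left_mono) (auto simp: power_le_one)
    hence T2: "A K \<le> 21 / sqrt n" by simp
    have "(3/2::real)^Suc K \<le> 2^Suc K" by (intro power_mono) auto
    hence "sqrt (real n) < 4 * 2^K" using K1 by simp
    hence "4 / 2^K \<le> 16 / sqrt n" using sn by (simp add: field_simps)
    thus ?thesis using T1 T2 by (simp add: add_divide_distrib[symmetric])
  qed
  finally show ?thesis by (simp add: ennreal_leI)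
qed

end



lemma nn_integral_distr_le:
  assumes T: "T \<in> measurable M N"
  shows "integral\<^sup>N (distr M N T) f \<le> (\<integral>\<^sup>+x. f (T x) \<partial>M)"
proof -
  have "integral\<^sup>S (distr M N T) g \<le> (\<integral>\<^sup>+x. f (T x) \<partial>M)"
    if g: "simple_function (distr M N T) g" "g \<le> f" for g
  proof -
    have gm: "g \<in> borel_measurable (distr M N T)"
      using borel_measurable_simple_function[OF g(1)] .
    have "integral\<^sup>S (distr M N T) g = integral\<^sup>N (distr M N T) g"
      by (rule nn_integral_eq_simple_integral[symmetric]) fact
    also have "\<dots> = (\<integral>\<^sup>+x. g (T x) \<partial>M)" by (rule nn_integral_distr[OF T gm])
    also have "\<dots> \<le> (\<integral>\<^sup>+x. f (T x) \<partial>M)" using g(2) by (intro nn_integral_mono) (auto simp: le_fun_def)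
    finally show ?thesis .
  qed
  thus ?thesis by (subst nn_integral_def) (auto intro!: SUP_least)
qed

lemma interval_char:
  fixes S :: "real set"
  assumes S: "is_interval S" "S \<noteq> {}" "bdd_above S" "bdd_below S"
  shows "x \<in> S \<longleftrightarrow> (Inf S < x \<and> x < Sup S) \<or> (x = Inf S \<and> Inf S \<in> S) \<or> (x = Sup S \<and> Sup S \<in> S)"
proof
  assume x: "x \<in> S"
  have "Inf S \<le> x" "x \<le> Sup S" using x S by (auto intro: cInf_lower cSup_upper)
  thus "(Inf S < x \<and> x < Sup S) \<or> (x = Inf S \<and> Inf S \<in> S) \<or> (x = Sup S \<and> Sup S \<in> S)"
    using x by force
next
  assume "(Inf S < x \<and> x < Sup S) \<or> (x = Inf S \<and> Inf S \<in> S) \<or> (x = Sup S \<and> Sup S \<in> S)"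
  thus "x \<in> S"
  proof (elim disjE conjE)
    assume a: "Inf S < x" "x < Sup S"
    obtain s1 where "s1 \<in> S" "s1 < x" using a cInf_less_iff[OF S(2,4)] by auto
    moreover obtain s2 where "s2 \<in> S" "x < s2" using a less_cSup_iff[OF S(2,3)] by auto
    ultimately show "x \<in> S" using S(1) unfolding is_interval_1 by (meson less_imp_le)
  qed auto
qed

lemma interval_borel:
  fixes S :: "real set"
  assumes S: "is_interval S" "S \<noteq> {}" "bdd_above S" "bdd_below S"
  shows "S \<in> sets borel"
proof -
  have "S = {Inf S<..<Sup S} \<union> ({Inf S} \<inter> S) \<union> ({Sup S} \<inter> S)"
  proof
    show "S \<subseteq> {Inf S<..<Sup S} \<union> ({Inf S} \<inter> S) \<union> ({Sup S} \<inter> S)"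
    proof
      fix x assume x: "x \<in> S"
      from interval_char[OF S, THEN iffD1, OF x]
      show "x \<in> {Inf S<..<Sup S} \<union> ({Inf S} \<inter> S) \<union> ({Sup S} \<inter> S)" using x by auto
    qed
    show "{Inf S<..<Sup S} \<union> ({Inf S} \<inter> S) \<union> ({Sup S} \<inter> S) \<subseteq> S"
    proof
      fix x assume "x \<in> {Inf S<..<Sup S} \<union> ({Inf S} \<inter> S) \<union> ({Sup S} \<inter> S)"
      hence "(Inf S < x \<and> x < Sup S) \<or> (x = Inf S \<and> Inf S \<in> S) \<or> (x = Sup S \<and> Sup S \<in> S)" by auto
      thus "x \<in> S" by (rule interval_char[OF S, THEN iffD2])
    qed
  qed
  also have "\<dots> \<in> sets borel"
  proof -
    have s: "{a} \<inter> S \<in> sets borel" for a :: real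
      by (cases "a \<in> S") (auto simp: borel_singleton)
    show ?thesis using s by (intro sets.Un) auto
  qed
  finally show ?thesis .
qed

context lift begin

definition LoI :: "real set \<Rightarrow> real" where
  "LoI S = (if Inf S \<in> S then Fm (Inf S) else Fp (Inf S))"
definition HiI :: "real set \<Rightarrow> real" where
  "HiI S = (if Sup S \<in> S then Fp (Sup S) else Fm (Sup S))"

lemma LoHi01: "0 \<le> LoI S" "LoI S \<le> 1" "0 \<le> HiI S" "HiI S \<le> 1"
  unfolding LoI_def HiI_def Fm_def Fp_def by auto

lemma W_between: "Fm (X \<omega>) \<le> W \<omega> v" "W \<omega> v \<le> Fp (X \<omega>)"
  by (rule W_ge, rule W_le)

lemma sand_out:
  assumes S: "is_interval S" "S \<noteq> {}" "bdd_above S" "bdd_below S" and x: "X \<omega> \<in> S"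
  shows "LoI S \<le> W \<omega> v \<and> W \<omega> v \<le> HiI S"
proof
  have i: "Inf S \<le> X \<omega>" "X \<omega> \<le> Sup S" using x S by (auto intro: cInf_lower cSup_upper)
  show "LoI S \<le> W \<omega> v"
  proof (cases "Inf S \<in> S")
    case True
    thus ?thesis using Fm_mono[OF i(1)] W_between[of \<omega> v] by (simp add: LoI_def)
  next
    case False
    hence "Inf S < X \<omega>" using i(1) x by (metis order_le_less)
    thus ?thesis using Fp_le_Fm[of "Inf S" "X \<omega>"] W_between[of \<omega> v] False by (simp add: LoI_def)
  qed
  show "W \<omega> v \<le> HiI S"
  proof (cases "Sup S \<in> S")
    case True
    thus ?thesis using Fp_mono[OF i(2)] W_between[of \<omega> v] by (simp add: HiI_def)
  next
    case False
    hence "X \<omega> < Sup S" using i(2) x by (metis order_le_less)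
    thus ?thesis using Fp_le_Fm[of "X \<omega>" "Sup S"] W_between[of \<omega> v] False by (simp add: HiI_def)
  qed
qed

lemma sand_in:
  assumes S: "is_interval S" "S \<noteq> {}" "bdd_above S" "bdd_below S"
    and w: "LoI S < W \<omega> v" "W \<omega> v < HiI S"
  shows "X \<omega> \<in> S"
proof -
  have lo: "Inf S \<le> X \<omega> \<and> (Inf S \<notin> S \<longrightarrow> Inf S < X \<omega>)"
  proof (cases "Inf S \<in> S")
    case True
    have "\<not> X \<omega> < Inf S"
    proof
      assume "X \<omega> < Inf S"
      hence "Fp (X \<omega>) \<le> Fm (Inf S)" by (rule Fp_le_Fm)
      thus False using w(1) True W_between[of \<omega> v] by (simp add: LoI_def)
    qed
    thus ?thesis using True by simp
  next
    case False
    have "\<not> X \<omega> \<le> Inf S"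
    proof
      assume "X \<omega> \<le> Inf S"
      hence "Fp (X \<omega>) \<le> Fp (Inf S)" by (rule Fp_mono)
      thus False using w(1) False W_between[of \<omega> v] by (simp add: LoI_def)
    qed
    thus ?thesis by simp
  qed
  have hi: "X \<omega> \<le> Sup S \<and> (Sup S \<notin> S \<longrightarrow> X \<omega> < Sup S)"
  proof (cases "Sup S \<in> S")
    case True
    have "\<not> Sup S < X \<omega>"
    proof
      assume "Sup S < X \<omega>"
      hence "Fp (Sup S) \<le> Fm (X \<omega>)" by (rule Fp_le_Fm)
      thus False using w(2) True W_between[of \<omega> v] by (simp add: HiI_def)
    qed
    thus ?thesis using True by simp
  next
    case False
    have "\<not> Sup S \<le> X \<omega>"
    proof
      assume "Sup S \<le> X \<omega>"
      hence "Fm (Sup S) \<le> Fm (X \<omega>)" by (rule Fm_mono)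
      thus False using w(2) False W_between[of \<omega> v] by (simp add: HiI_def)
    qed
    thus ?thesis by simp
  qed
  have disj: "(Inf S < X \<omega> \<and> X \<omega> < Sup S) \<or> (X \<omega> = Inf S \<and> Inf S \<in> S) \<or> (X \<omega> = Sup S \<and> Sup S \<in> S)"
  proof (cases "X \<omega> = Inf S")
    case True thus ?thesis using lo by auto
  next
    case F1: False
    show ?thesis
    proof (cases "X \<omega> = Sup S")
      case True thus ?thesis using hi by auto
    next
      case False
      have "Inf S < X \<omega>" using lo F1 by linarith
      moreover have "X \<omega> < Sup S" using hi False by linarith
      ultimately show ?thesis by simp
    qed
  qed
  show ?thesis by (rule interval_char[OF S, THEN iffD2, OF disj])
qed

end





theorem mainTheorem14:
  fixes \<mu> :: "(real \<times> real) measure" and n :: nat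
  assumes "prob_space \<mu>"
    and "sets \<mu> = sets borel"
    and "measure \<mu> ({0..1} \<times> {0..1}) = 1"
    and "n \<ge> 1"
  shows "(\<integral>\<^sup>+ X. (\<Squnion>(S, T) \<in> unit_subintervals \<times> unit_subintervals.
              ennreal \<bar>measure \<mu> (S \<times> T) - empirical n X (S \<times> T)\<bar>)
            \<partial>(PiM {..<n} (\<lambda>_. \<mu>)))
         \<le> ennreal (174 / sqrt (real n))"
proof -
  interpret mu: prob_space \<mu> by fact
  define I where "I = {..<n}"
  define f where "f = (\<lambda>X. \<Squnion>(S, T) \<in> unit_subintervals \<times> unit_subintervals.
              ennreal \<bar>measure \<mu> (S \<times> T) - empirical n X (S \<times> T)\<bar>)"
  have n0: "n > 0" using assms(4) by simp
  have sn: "sqrt (real n) > 0" using n0 by simp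
  have "(\<integral>\<^sup>+X. f X \<partial>PiM I (\<lambda>_. \<mu>)) \<le> ennreal (174 / sqrt (real n))"
  proof (cases "n < 4")
    case True
    have f1: "f X \<le> 1" for X
      unfolding f_def
    proof (intro SUP_least, clarify)
      fix S T
      have a: "0 \<le> measure \<mu> (S \<times> T)" "measure \<mu> (S \<times> T) \<le> 1" by (auto simp: mu.prob_le_1)
      have "card {i\<in>{..<n}. X i \<in> S \<times> T} \<le> card {..<n}" by (intro card_mono) auto
      hence e: "0 \<le> empirical n X (S \<times> T)" "empirical n X (S \<times> T) \<le> 1"
        unfolding empirical_def using n0 by auto
      have "\<bar>measure \<mu> (S \<times> T) - empirical n X (S \<times> T)\<bar> \<le> 1" using a e by linarith
      thus "ennreal \<bar>measure \<mu> (S \<times> T) - empirical n X (S \<times> T)\<bar> \<le> 1" by (simp add: ennreal_le_1)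
    qed
    interpret PM: prob_space "PiM I (\<lambda>_. \<mu>)" by (intro prob_space_PiM) (simp add: assms(1))
    have "(\<integral>\<^sup>+X. f X \<partial>PiM I (\<lambda>_. \<mu>)) \<le> (\<integral>\<^sup>+X. 1 \<partial>PiM I (\<lambda>_. \<mu>))" by (intro nn_integral_mono f1)
    also have "\<dots> = 1" by (simp add: PM.emeasure_space_1)
    also have "1 \<le> ennreal (174 / sqrt (real n))"
    proof -
      have "sqrt (real n) \<le> sqrt 4" using True by (intro real_sqrt_le_mono) simp
      hence "sqrt (real n) \<le> 2" by simp
      hence "1 \<le> 174 / sqrt (real n)" using sn by (simp add: field_simps)
      thus ?thesis by (simp add: ennreal_leI)
    qed
    finally show ?thesis .
  next
    case False
    hence n4: "4 \<le> n" by simp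
    have sp: "space \<mu> = UNIV" using sets_eq_imp_space_eq[OF assms(2)] by simp
    have sbb: "sets \<mu> = sets (borel \<Otimes>\<^sub>M borel)"
      using assms(2) by (metis borel_prod)
    have fstm: "fst \<in> borel_measurable \<mu>"
    proof -
      have "fst \<in> measurable (borel \<Otimes>\<^sub>M borel) (borel :: real measure)" by measurable
      thus ?thesis using measurable_cong_sets[OF sbb refl, of "borel :: real measure"] by simp
    qed
    have sndm: "snd \<in> borel_measurable \<mu>"
    proof -
      have "snd \<in> measurable (borel \<Otimes>\<^sub>M borel) (borel :: real measure)" by measurable
      thus ?thesis using measurable_cong_sets[OF sbb refl, of "borel :: real measure"] by simp
    qed
    interpret l1: lift \<mu> fst by unfold_locales (rule fstm)
    interpret l2: lift \<mu> snd by unfold_locales (rule sndm)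
    define \<Lambda> where "\<Lambda> = \<mu> \<Otimes>\<^sub>M P01"
    define U1 where "U1 = (\<lambda>p. l1.W (fst p) (snd p))"
    define U2 where "U2 = (\<lambda>p. l2.W (fst p) (snd p))"
    have Lprob: "prob_space \<Lambda>" unfolding \<Lambda>_def by (rule l1.Q_prob)
    have ch: "chain \<Lambda> U1 U2"
    proof (intro chain.intro Lprob chain_axioms.intro)
      show "U1 \<in> borel_measurable \<Lambda>" unfolding U1_def \<Lambda>_def by (rule l1.W_meas)
      show "U2 \<in> borel_measurable \<Lambda>" unfolding U2_def \<Lambda>_def by (rule l2.W_meas)
      show "measure \<Lambda> {\<omega> \<in> space \<Lambda>. a \<le> U1 \<omega> \<and> U1 \<omega> \<le> b} \<le> b - a" if "a \<le> b" for a b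
        unfolding U1_def \<Lambda>_def by (rule l1.U3[OF that])
      show "measure \<Lambda> {\<omega> \<in> space \<Lambda>. a \<le> U2 \<omega> \<and> U2 \<omega> \<le> b} \<le> b - a" if "a \<le> b" for a b
        unfolding U2_def \<Lambda>_def by (rule l2.U3[OF that])
    qed
    interpret C: chain \<Lambda> U1 U2 by (rule ch)
    define K where "K = (LEAST k. sqrt (real n) < 2 * (3/2)^Suc k)"
    define s where "s = (\<lambda>m::nat. 2 * (3/2)^m / sqrt (real n))"
    define G where "G = (\<lambda>Y. (\<Sum>m\<le>K. Gf \<Lambda> n (C.Fam m) (s m) (4 / 2^m) Y) + Gf \<Lambda> n (C.Fam K) (s K) (4 / 2^K) Y + 4 / 2^K)"
    have intG: "(\<integral>\<^sup>+Y. ennreal (G Y) \<partial>PiM I (\<lambda>_. \<Lambda>)) \<le> ennreal (132 / sqrt (real n))"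
      unfolding G_def I_def K_def s_def by (rule C.int_G[OF n4])
    have s0: "\<And>m. s m > 0" using sn by (simp add: s_def)
    have chainb: "\<bar>devs \<Lambda> n (C.Rst cl x1 y1 x2 y2) Y\<bar> \<le> G Y"
      if "0 \<le> x1" "x1 \<le> 1" "0 \<le> y1" "y1 \<le> 1" "0 \<le> x2" "x2 \<le> 1" "0 \<le> y2" "y2 \<le> 1" for cl x1 y1 x2 y2 Y
      unfolding G_def by (rule C.chain_bound[OF that n0 s0])
    have spL: "space \<Lambda> = UNIV" by (simp add: \<Lambda>_def space_pair_measure sp space_P01)
    have distr_eq: "distr (PiM I (\<lambda>_. \<Lambda>)) (PiM I (\<lambda>_. \<mu>)) (compose I fst) = PiM I (\<lambda>_. \<mu>)"
    proof -
      have "distr (PiM I (\<lambda>_. \<Lambda>)) (PiM I (\<lambda>_. \<mu>)) (compose I fst) = PiM I (\<lambda>i. distr \<Lambda> \<mu> fst)"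
        by (rule distr_PiM_finite_prob_space)
           (auto simp: I_def \<Lambda>_def intro: product_prob_spaceI l1.Q_prob assms(1))
      also have "distr \<Lambda> \<mu> fst = \<mu>" unfolding \<Lambda>_def by (rule prob_space.distr_pair_fst[OF prob_space_P01])
      finally show ?thesis by simp
    qed
    have cm: "compose I fst \<in> measurable (PiM I (\<lambda>_. \<Lambda>)) (PiM I (\<lambda>_. \<mu>))"
      unfolding compose_def \<Lambda>_def by measurable
    have transfer: "(\<integral>\<^sup>+X. f X \<partial>PiM I (\<lambda>_. \<mu>)) \<le> (\<integral>\<^sup>+Y. f (compose I fst Y) \<partial>PiM I (\<lambda>_. \<Lambda>))"
      using nn_integral_distr_le[OF cm, of f] distr_eq by simp
    have pw: "f (compose I fst Y) \<le> ennreal (G Y)" for Y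
    proof -
      define X where "X = compose I fst Y"
      have Xi: "\<And>i. i < n \<Longrightarrow> X i = fst (Y i)" by (simp add: X_def compose_def I_def)
      show ?thesis unfolding f_def X_def[symmetric]
      proof (intro SUP_least, clarify)
        fix S T assume S: "S \<in> unit_subintervals" and T: "T \<in> unit_subintervals"
        show "ennreal \<bar>measure \<mu> (S \<times> T) - empirical n X (S \<times> T)\<bar> \<le> ennreal (G Y)"
        proof (cases "S = {} \<or> T = {}")
          case True
          hence e: "S \<times> T = {}" by auto
          show ?thesis unfolding e by (simp add: empirical_def)
        next
          case False
          have S01: "S \<subseteq> {0..1}" "is_interval S" using S unfolding unit_subintervals_def by auto
          have "bdd_above S" by (rule bdd_aboveI[where M=1]) (use S01 in auto)
          moreover have "bdd_below S" by (rule bdd_belowI[where m=0]) (use S01 in auto)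
          ultimately have Si: "is_interval S" "S \<noteq> {}" "bdd_above S" "bdd_below S"
            using S01 False by auto
          have T01: "T \<subseteq> {0..1}" "is_interval T" using T unfolding unit_subintervals_def by auto
          have "bdd_above T" by (rule bdd_aboveI[where M=1]) (use T01 in auto)
          moreover have "bdd_below T" by (rule bdd_belowI[where m=0]) (use T01 in auto)
          ultimately have Ti: "is_interval T" "T \<noteq> {}" "bdd_above T" "bdd_below T"
            using T01 False by auto
          define R0 where "R0 = C.Rst False (l1.LoI S) (l1.HiI S) (l2.LoI T) (l2.HiI T)"
          define R1 where "R1 = C.Rst True (l1.LoI S) (l1.HiI S) (l2.LoI T) (l2.HiI T)"
          have [measurable]: "R0 \<in> sets \<Lambda>" "R1 \<in> sets \<Lambda>" unfolding R0_def R1_def by (rule C.Rst_sets)+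
          have R0sub: "R0 \<subseteq> (S \<times> T) \<times> UNIV"
          proof
            fix p assume "p \<in> R0"
            hence "l1.LoI S < l1.W (fst p) (snd p)" "l1.W (fst p) (snd p) < l1.HiI S"
                  "l2.LoI T < l2.W (fst p) (snd p)" "l2.W (fst p) (snd p) < l2.HiI T"
              unfolding R0_def C.Rst_def Jset_def unfolding U1_def U2_def by auto
            hence "fst (fst p) \<in> S" "snd (fst p) \<in> T"
              using l1.sand_in[OF Si] l2.sand_in[OF Ti] by blast+
            thus "p \<in> (S \<times> T) \<times> UNIV" by (cases p) auto
          qed
          have R1sup: "(S \<times> T) \<times> UNIV \<subseteq> R1"
          proof
            fix p assume "p \<in> (S \<times> T) \<times> (UNIV :: real set)"
            hence "fst (fst p) \<in> S" "snd (fst p) \<in> T" by auto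
            hence "l1.LoI S \<le> l1.W (fst p) (snd p) \<and> l1.W (fst p) (snd p) \<le> l1.HiI S"
                  "l2.LoI T \<le> l2.W (fst p) (snd p) \<and> l2.W (fst p) (snd p) \<le> l2.HiI T"
              using l1.sand_out[OF Si] l2.sand_out[OF Ti] by blast+
            thus "p \<in> R1" unfolding R1_def C.Rst_def Jset_def spL unfolding U1_def U2_def by auto
          qed
          have Sb: "S \<in> sets borel" by (rule interval_borel[OF Si])
          have Tb: "T \<in> sets borel" by (rule interval_borel[OF Ti])
          have ST: "S \<times> T \<in> sets \<mu>" unfolding sbb using Sb Tb by (intro pair_measureI) auto
          have mST: "measure \<Lambda> ((S \<times> T) \<times> UNIV) = measure \<mu> (S \<times> T)"
          proof -
            interpret P: prob_space P01 by (rule prob_space_P01)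
            have "emeasure \<Lambda> ((S \<times> T) \<times> space P01) = emeasure \<mu> (S \<times> T) * emeasure P01 (space P01)"
              unfolding \<Lambda>_def by (rule P.emeasure_pair_measure_Times[OF ST]) simp
            moreover have "emeasure P01 UNIV = 1" using P.emeasure_space_1 by (simp add: space_P01)
            ultimately show ?thesis by (simp add: measure_def space_P01)
          qed
          have m01: "measure \<Lambda> R1 \<le> measure \<Lambda> R0"
          proof -
            define Z1 where "Z1 = (\<lambda>c. {\<omega> \<in> space \<Lambda>. c \<le> U1 \<omega> \<and> U1 \<omega> \<le> c})"
            define Z2 where "Z2 = (\<lambda>c. {\<omega> \<in> space \<Lambda>. c \<le> U2 \<omega> \<and> U2 \<omega> \<le> c})"
            have [measurable]: "Z1 c \<in> sets \<Lambda>" "Z2 c \<in> sets \<Lambda>" for c unfolding Z1_def Z2_def by measurable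
            have z: "measure \<Lambda> (Z1 c) \<le> 0" "measure \<Lambda> (Z2 c) \<le> 0" for c
              using C.strip1[of c c] C.strip2[of c c] by (simp_all add: Z1_def Z2_def)
            have "R1 \<subseteq> R0 \<union> Z1 (l1.LoI S) \<union> Z1 (l1.HiI S) \<union> Z2 (l2.LoI T) \<union> Z2 (l2.HiI T)"
              unfolding R0_def R1_def C.Rst_def Jset_def Z1_def Z2_def by auto
            hence "measure \<Lambda> R1 \<le> measure \<Lambda> (R0 \<union> Z1 (l1.LoI S) \<union> Z1 (l1.HiI S) \<union> Z2 (l2.LoI T) \<union> Z2 (l2.HiI T))"
              by (intro C.finite_measure_mono) auto
            also have "\<dots> \<le> measure \<Lambda> R0 + measure \<Lambda> (Z1 (l1.LoI S)) + measure \<Lambda> (Z1 (l1.HiI S))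
                + measure \<Lambda> (Z2 (l2.LoI T)) + measure \<Lambda> (Z2 (l2.HiI T))"
              by (intro order.trans[OF measure_Un_le] add_mono order_refl) auto
            finally show ?thesis using z[of "l1.LoI S"] z[of "l1.HiI S"] z[of "l2.LoI T"] z[of "l2.HiI T"] by linarith
          qed
          have mono0: "measure \<Lambda> R0 \<le> measure \<Lambda> ((S \<times> T) \<times> UNIV)"
            using R0sub ST by (intro C.finite_measure_mono) (auto simp: \<Lambda>_def)
          have mono1: "measure \<Lambda> ((S \<times> T) \<times> UNIV) \<le> measure \<Lambda> R1"
            using R1sup by (intro C.finite_measure_mono) auto
          have meq: "measure \<Lambda> R0 = measure \<mu> (S \<times> T)" "measure \<Lambda> R1 = measure \<mu> (S \<times> T)"
            using m01 mono0 mono1 mST by linarith+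
          have c0: "card {i\<in>{..<n}. Y i \<in> R0} \<le> card {i\<in>{..<n}. X i \<in> S \<times> T}"
            using R0sub Xi by (intro card_mono) auto
          have c1: "card {i\<in>{..<n}. X i \<in> S \<times> T} \<le> card {i\<in>{..<n}. Y i \<in> R1}"
            using R1sup Xi by (intro card_mono) (auto simp: mem_Times_iff)
          have e0: "empirical n Y R0 \<le> empirical n X (S \<times> T)"
            unfolding empirical_def using c0 by (intro divide_right_mono) auto
          have e1: "empirical n X (S \<times> T) \<le> empirical n Y R1"
            unfolding empirical_def using c1 by (intro divide_right_mono) auto
          have b0: "\<bar>devs \<Lambda> n R0 Y\<bar> \<le> G Y" unfolding R0_def
            by (intro chainb l1.LoHi01 l2.LoHi01)
          have b1: "\<bar>devs \<Lambda> n R1 Y\<bar> \<le> G Y" unfolding R1_def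
            by (intro chainb l1.LoHi01 l2.LoHi01)
          have "\<bar>measure \<mu> (S \<times> T) - empirical n X (S \<times> T)\<bar> \<le> G Y"
            using b0 b1 e0 e1 meq unfolding devs_def abs_le_iff by linarith
          thus ?thesis by (intro ennreal_leI)
        qed
      qed
    qed
    have "(\<integral>\<^sup>+X. f X \<partial>PiM I (\<lambda>_. \<mu>)) \<le> (\<integral>\<^sup>+Y. f (compose I fst Y) \<partial>PiM I (\<lambda>_. \<Lambda>))" by (rule transfer)
    also have "\<dots> \<le> (\<integral>\<^sup>+Y. ennreal (G Y) \<partial>PiM I (\<lambda>_. \<Lambda>))" by (intro nn_integral_mono pw)
    also have "\<dots> \<le> ennreal (132 / sqrt (real n))" by (rule intG)
    also have "\<dots> \<le> ennreal (174 / sqrt (real n))" using sn by (intro ennreal_leI divide_right_mono) auto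
    finally show ?thesis .
  qed
  thus ?thesis unfolding f_def I_def .
qed


end
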